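(* Let $H\in(0,1)$, $\delta\in(0,H)$, $\rho>0$, and let $B^H$ be a fractional Brownian motion on $[0,1]$ with Hurst index $H$. Let $n\ge N^*(\rho,\delta)$ and suppose that $\mathbf{B}^H_n$ satisfies the BCE condition. Then for every $m\ge1$ and $1\le k\le 2^{n+m-1}$, $$\Theta^+_n(m,k)\cdot\mathbf{1}\{\boldsymbol\beta^\top\boldsymbol\alpha_n(m,k)>\rho\ell_{n+m}\}\le 1\quad\text{and}\quad \Theta^-_n(m,k)\cdot\mathbf{1}\{\boldsymbol\beta^\top\boldsymbol\alpha_n(m,k)<-\rho\ell_{n+m}\}\le 1.$$
   Context: A fractional Brownian motion with Hurst index $H$ is a centered Gaussian process with $B^H(0)=0$ and covariance $\mathbb{E}[B^H(s)B^H(t)]=\tfrac12(|s|^{2H}+|t|^{2H}-|s-t|^{2H})$. $t^n_i=i/2^n$, $\ell_k=2^{-(H-\delta)k}$, $\mathbf{B}^H_n=(B^H(t^n_0),\dots,B^H(t^n_{2^n}))$. For $m\ge1$, $1\le k\le 2^{n+m-1}$: $\boldsymbol\alpha_n(m,k)=(B^H(t^{n+m}_{2k-2}),B^H(t^{n+m}_{2k-1}),B^H(t^{n+m}_{2k}))^\top$, $\boldsymbol\beta=(1/2,-1,1/2)^\top$, $\mu_n(m,k)=\boldsymbol\beta^\top\mathbb{E}[\boldsymbol\alpha_n(m,k)\mid\mathbf{B}^H_n]$. BCE condition: $|\mu_n(m,k)|\le \tfrac{\rho}{2}\ell_{n+m}$ for all $m\ge1$ and $1\le k\le 2^{n+m-1}$.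 $\Xi^{(m,k)}_n(\theta)=\mathbb{E}[\exp\{\theta\boldsymbol\beta^\top\boldsymbol\alpha_n(m,k)\}\mid\mathbf{B}^H_n]$. $Z_n=\sum_{m\ge1}2^{n+m}\exp\{-\tfrac{\rho^2}{8}2^{2(n+m)\delta}\}$, $g_n(m)=Z_n^{-1}2^{n+m}\exp\{-\tfrac{\rho^2}{8}2^{2(n+m)\delta}\}$, $N^*(\rho,\delta)=1+\sup\{n\ge1:Z_n>1\}$. $\theta^+_n(m)=\tfrac{\rho}{2}2^{(n+m)(H+\delta)}$, $\theta^-_n(m)=-\theta^+_n(m)$, and $\Theta^\pm_n(m,k)=g_n(m)^{-1}2^{n+m}\exp\{-\theta^\pm_n(m)\boldsymbol\beta^\top\boldsymbol\alpha_n(m,k)+\log\Xi^{(m,k)}_n(\theta^\pm_n(m))\}$. *)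

theory Defs
  imports "HOL-Probability.Probability"
begin

definition gaussian_rv :: "'a measure \<Rightarrow> ('a \<Rightarrow> real) \<Rightarrow> bool" where
  "gaussian_rv M X \<longleftrightarrow> X \<in> borel_measurable M \<and>
     ((\<exists>c. AE \<omega> in M. X \<omega> = c) \<or>
      (\<exists>\<mu> \<sigma>. \<sigma> > 0 \<and> distributed M lborel X (normal_density \<mu> \<sigma>)))"

definition fbm :: "'a measure \<Rightarrow> real \<Rightarrow> (real \<Rightarrow> 'a \<Rightarrow> real) \<Rightarrow> bool" where
  "fbm M H B \<longleftrightarrow> prob_space M \<and>
     (\<forall>t\<in>{0..1}. B t \<in> borel_measurable M) \<and>
     (AE \<omega> in M. B 0 \<omega> = 0) \<and>
     (\<forall>t\<in>{0..1}. integrable M (B t) \<and> integral\<^sup>L M (B t) = 0) \<and>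
     (\<forall>s\<in>{0..1}. \<forall>t\<in>{0..1}. integrable M (\<lambda>\<omega>. B s \<omega> * B t \<omega>) \<and>
        integral\<^sup>L M (\<lambda>\<omega>. B s \<omega> * B t \<omega>) =
          (\<bar>s\<bar> powr (2*H) + \<bar>t\<bar> powr (2*H) - \<bar>s - t\<bar> powr (2*H)) / 2) \<and>
     (\<forall>I c. finite I \<longrightarrow> I \<subseteq> {0..1} \<longrightarrow> gaussian_rv M (\<lambda>\<omega>. \<Sum>t\<in>I. c t * B t \<omega>))"

definition tgrid :: "nat \<Rightarrow> nat \<Rightarrow> real" where
  "tgrid n i = real i / 2 ^ n"

definition ell :: "real \<Rightarrow> real \<Rightarrow> nat \<Rightarrow> real" where
  "ell H \<delta> k = 2 powr (- (H - \<delta>) * real k)"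

definition gridF :: "'a measure \<Rightarrow> (real \<Rightarrow> 'a \<Rightarrow> real) \<Rightarrow> nat \<Rightarrow> 'a measure" where
  "gridF M B n = sigma (space M)
     {B (tgrid n i) -` A \<inter> space M | i A. i \<le> 2 ^ n \<and> A \<in> sets borel}"

definition balpha :: "(real \<Rightarrow> 'a \<Rightarrow> real) \<Rightarrow> nat \<Rightarrow> nat \<Rightarrow> nat \<Rightarrow> 'a \<Rightarrow> real" where
  "balpha B n m k \<omega> = (1/2) * B (tgrid (n+m) (2*k-2)) \<omega> - B (tgrid (n+m) (2*k-1)) \<omega>
      + (1/2) * B (tgrid (n+m) (2*k)) \<omega>"

definition mu :: "'a measure \<Rightarrow> (real \<Rightarrow> 'a \<Rightarrow> real) \<Rightarrow> nat \<Rightarrow> nat \<Rightarrow> nat \<Rightarrow> 'a \<Rightarrow> real" where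
  "mu M B n m k = (\<lambda>\<omega>. (1/2) * real_cond_exp M (gridF M B n) (B (tgrid (n+m) (2*k-2))) \<omega>
      - real_cond_exp M (gridF M B n) (B (tgrid (n+m) (2*k-1))) \<omega>
      + (1/2) * real_cond_exp M (gridF M B n) (B (tgrid (n+m) (2*k))) \<omega>)"

definition BCE :: "'a measure \<Rightarrow> (real \<Rightarrow> 'a \<Rightarrow> real) \<Rightarrow> real \<Rightarrow> real \<Rightarrow> real \<Rightarrow> nat \<Rightarrow> 'a \<Rightarrow> bool" where
  "BCE M B H \<delta> \<rho> n \<omega> \<longleftrightarrow>
     (\<forall>m k. 1 \<le> m \<longrightarrow> 1 \<le> k \<longrightarrow> k \<le> 2 ^ (n+m-1) \<longrightarrow>
        \<bar>mu M B n m k \<omega>\<bar> \<le> \<rho> / 2 * ell H \<delta> (n+m))"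

definition Xi :: "'a measure \<Rightarrow> (real \<Rightarrow> 'a \<Rightarrow> real) \<Rightarrow> nat \<Rightarrow> nat \<Rightarrow> nat \<Rightarrow> real \<Rightarrow> 'a \<Rightarrow> real" where
  "Xi M B n m k \<theta> = real_cond_exp M (gridF M B n) (\<lambda>\<omega>. exp (\<theta> * balpha B n m k \<omega>))"

definition zterm :: "real \<Rightarrow> real \<Rightarrow> nat \<Rightarrow> nat \<Rightarrow> real" where
  "zterm \<rho> \<delta> n m = 2 ^ (n+m) * exp (- (\<rho>^2 / 8) * 2 powr (2 * real (n+m) * \<delta>))"

definition Zn :: "real \<Rightarrow> real \<Rightarrow> nat \<Rightarrow> real" where
  "Zn \<rho> \<delta> n = (\<Sum>j. zterm \<rho> \<delta> n (Suc j))"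

definition gn :: "real \<Rightarrow> real \<Rightarrow> nat \<Rightarrow> nat \<Rightarrow> real" where
  "gn \<rho> \<delta> n m = zterm \<rho> \<delta> n m / Zn \<rho> \<delta> n"

text \<open>N^*(\<rho>,\<delta>) = 1 + sup{n \<ge> 1 : Z_n > 1} (sup of the empty set is 0).\<close>
definition Nstar :: "real \<Rightarrow> real \<Rightarrow> nat" where
  "Nstar \<rho> \<delta> = 1 + Sup {n. 1 \<le> n \<and> Zn \<rho> \<delta> n > 1}"

definition theta_plus :: "real \<Rightarrow> real \<Rightarrow> real \<Rightarrow> nat \<Rightarrow> nat \<Rightarrow> real" where
  "theta_plus H \<delta> \<rho> n m = \<rho> / 2 * 2 powr (real (n+m) * (H + \<delta>))"

definition theta_minus :: "real \<Rightarrow> real \<Rightarrow> real \<Rightarrow> nat \<Rightarrow> nat \<Rightarrow> real" where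
  "theta_minus H \<delta> \<rho> n m = - theta_plus H \<delta> \<rho> n m"

definition Theta :: "'a measure \<Rightarrow> (real \<Rightarrow> 'a \<Rightarrow> real) \<Rightarrow> real \<Rightarrow> real \<Rightarrow> nat \<Rightarrow> nat \<Rightarrow> nat \<Rightarrow> real \<Rightarrow> 'a \<Rightarrow> real" where
  "Theta M B \<rho> \<delta> n m k \<theta> \<omega> = inverse (gn \<rho> \<delta> n m) * 2 ^ (n+m) *
     exp (- \<theta> * balpha B n m k \<omega> + ln (Xi M B n m k \<theta> \<omega>))"

end

theory Submission
  imports Defs "HOL-Real_Asymp.Real_Asymp"
begin

lemma zterm_summable_aux:
  fixes c \<delta> :: real assumes "0 < c" "0 < \<delta>"
  shows "summable (\<lambda>p::nat. 2 ^ p * exp (- c * 2 powr (2 * real p * \<delta>)))"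
proof -
  have lim: "((\<lambda>x::real. 4 powr x * exp (- c * 2 powr (2 * x * \<delta>))) \<longlongrightarrow> 0) at_top"
    using assms by real_asymp
  have "(\<lambda>p::nat. 4 powr real p * exp (- c * 2 powr (2 * real p * \<delta>))) \<longlonglongrightarrow> 0"
    by (rule filterlim_compose[OF lim filterlim_real_sequentially])
  then have "eventually (\<lambda>p::nat. 4 powr real p * exp (- c * 2 powr (2 * real p * \<delta>)) < 1) sequentially"
    by (rule order_tendstoD) simp
  then have ev: "eventually (\<lambda>p::nat. norm (2 ^ p * exp (- c * 2 powr (2 * real p * \<delta>))) \<le> (1/2) ^ p) sequentially"
  proof eventually_elim
    case (elim p)
    have "(4::real) powr real p = 2 ^ p * 2 ^ p"
      by (simp add: powr_realpow power_mult_distrib[symmetric])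
    then have "2 ^ p * (2 ^ p * exp (- c * 2 powr (2 * real p * \<delta>))) < 1" using elim by (simp add: mult.assoc)
    then show ?case by (simp add: field_simps power_one_over)
  qed
  show ?thesis
    by (rule summable_comparison_test_ev[OF ev]) (simp add: summable_geometric)
qed

lemma zterm_eq: "zterm \<rho> \<delta> n m = (\<lambda>p::nat. 2 ^ p * exp (- (\<rho>^2/8) * 2 powr (2 * real p * \<delta>))) (n + m)"
  by (simp add: zterm_def)

lemma Zn_props:
  assumes "0 < \<rho>" "0 < \<delta>" "Nstar \<rho> \<delta> \<le> n"
  shows "0 < Zn \<rho> \<delta> n" "Zn \<rho> \<delta> n \<le> 1"
proof -
  define f where "f = (\<lambda>p::nat. 2 ^ p * exp (- (\<rho>^2/8) * 2 powr (2 * real p * \<delta>)))"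
  have sf: "summable f" unfolding f_def using assms by (intro zterm_summable_aux) auto
  have Z: "Zn \<rho> \<delta> k = (\<Sum>i. f (i + Suc k))" for k
    unfolding Zn_def zterm_def f_def by (simp add: add.commute)
  have st: "summable (\<lambda>i. f (i + Suc k))" for k using sf by (subst summable_iff_shift)
  have fpos: "0 < f p" for p unfolding f_def by simp
  show "0 < Zn \<rho> \<delta> n" unfolding Z by (rule suminf_pos[OF st fpos])
  obtain N where N: "\<And>k. k \<ge> N \<Longrightarrow> norm (\<Sum>i. f (i + k)) < 1"
    using suminf_exist_split[OF zero_less_one sf] by blast
  have fin: "finite {k. 1 \<le> k \<and> Zn \<rho> \<delta> k > 1}"
  proof (rule finite_subset[of _ "{..<N}"])
    show "{k. 1 \<le> k \<and> Zn \<rho> \<delta> k > 1} \<subseteq> {..<N}"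
    proof
      fix k assume k: "k \<in> {k. 1 \<le> k \<and> Zn \<rho> \<delta> k > 1}"
      show "k \<in> {..<N}"
      proof (rule ccontr)
        assume "k \<notin> {..<N}"
        then have "Suc k \<ge> N" by simp
        then have "norm (Zn \<rho> \<delta> k) < 1" unfolding Z by (rule N)
        with k show False by simp
      qed
    qed
  qed simp
  show "Zn \<rho> \<delta> n \<le> 1"
  proof (rule ccontr)
    assume "\<not> Zn \<rho> \<delta> n \<le> 1"
    moreover have "1 \<le> n" using assms(3) by (simp add: Nstar_def)
    ultimately have "n \<in> {k. 1 \<le> k \<and> Zn \<rho> \<delta> k > 1}" by simp
    then have "n \<le> Sup {k. 1 \<le> k \<and> Zn \<rho> \<delta> k > 1}" by (rule le_cSup_finite[OF fin])
    with assms(3) show False by (simp add: Nstar_def)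
  qed
qed


lemma (in prob_space) char_weighted:
  fixes u Z :: "'a \<Rightarrow> real"
  assumes Z[measurable]: "Z \<in> borel_measurable M"
    and u: "integrable M u" "\<And>x. 0 \<le> u x" and c: "(\<integral>x. u x \<partial>M) = c" "0 < c"
  shows "real_distribution (distr (density M (\<lambda>x. ennreal (u x / c))) borel Z)"
    and "char (distr (density M (\<lambda>x. ennreal (u x / c))) borel Z) s =
          Complex ((\<integral>x. u x * cos (s * Z x) \<partial>M) / c) ((\<integral>x. u x * sin (s * Z x) \<partial>M) / c)"
    and "A \<in> sets borel \<Longrightarrow> emeasure (distr (density M (\<lambda>x. ennreal (u x))) borel Z) A
           = ennreal c * emeasure (distr (density M (\<lambda>x. ennreal (u x / c))) borel Z) A"
proof -
  have [measurable]: "u \<in> borel_measurable M" using u(1) by (rule borel_measurable_integrable)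
  let ?D = "density M (\<lambda>x. ennreal (u x / c))"
  have "emeasure ?D (space M) = (\<integral>\<^sup>+ x. ennreal (u x / c) \<partial>M)"
    by (simp add: emeasure_density nn_integral_set_ennreal)
  also have "\<dots> = ennreal (\<integral>x. u x / c \<partial>M)"
    using u c by (intro nn_integral_eq_integral) auto
  also have "\<dots> = 1" using c by simp
  finally have "prob_space ?D" by (intro prob_spaceI) simp
  then show "real_distribution (distr ?D borel Z)"
    unfolding real_distribution_def real_distribution_axioms_def
    by (auto intro: prob_space.prob_space_distr)
  have int: "integrable M (\<lambda>x. (u x / c) *\<^sub>R iexp (s * Z x))"
    by (rule Bochner_Integration.integrable_bound[where f="\<lambda>x. u x / c"])
       (use u c in \<open>auto simp: norm_mult\<close>)
  have "char (distr ?D borel Z) s = (\<integral>x. iexp (s * Z x) \<partial>?D)"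
    unfolding char_def by (subst integral_distr) auto
  also have "\<dots> = (\<integral>x. (u x / c) *\<^sub>R iexp (s * Z x) \<partial>M)"
    using u c by (subst integral_density) auto
  also have "\<dots> = Complex ((\<integral>x. u x * cos (s * Z x) \<partial>M) / c) ((\<integral>x. u x * sin (s * Z x) \<partial>M) / c)"
  proof (rule complex_eqI)
    have "Re (\<integral>x. (u x / c) *\<^sub>R iexp (s * Z x) \<partial>M) = (\<integral>x. Re ((u x / c) *\<^sub>R iexp (s * Z x)) \<partial>M)"
      using int by (rule integral_Re[symmetric])
    also have "\<dots> = (\<integral>x. u x * cos (s * Z x) / c \<partial>M)"
      by (intro Bochner_Integration.integral_cong) (auto simp: Re_exp)
    finally show "Re (\<integral>x. (u x / c) *\<^sub>R iexp (s * Z x) \<partial>M) = Re (Complex ((\<integral>x. u x * cos (s * Z x) \<partial>M) / c) ((\<integral>x. u x * sin (s * Z x) \<partial>M) / c))"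
      by simp
    have "Im (\<integral>x. (u x / c) *\<^sub>R iexp (s * Z x) \<partial>M) = (\<integral>x. Im ((u x / c) *\<^sub>R iexp (s * Z x)) \<partial>M)"
      using int by (rule integral_Im[symmetric])
    also have "\<dots> = (\<integral>x. u x * sin (s * Z x) / c \<partial>M)"
      by (intro Bochner_Integration.integral_cong) (auto simp: Im_exp)
    finally show "Im (\<integral>x. (u x / c) *\<^sub>R iexp (s * Z x) \<partial>M) = Im (Complex ((\<integral>x. u x * cos (s * Z x) \<partial>M) / c) ((\<integral>x. u x * sin (s * Z x) \<partial>M) / c))"
      by simp
  qed
  finally show "char (distr ?D borel Z) s = Complex ((\<integral>x. u x * cos (s * Z x) \<partial>M) / c) ((\<integral>x. u x * sin (s * Z x) \<partial>M) / c)" .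
  assume A[measurable]: "A \<in> sets borel"
  have "emeasure (distr (density M (\<lambda>x. ennreal (u x))) borel Z) A
        = (\<integral>\<^sup>+ x. ennreal (u x) * indicator (Z -` A \<inter> space M) x \<partial>M)"
    by (simp add: emeasure_distr emeasure_density)
  also have "\<dots> = (\<integral>\<^sup>+ x. ennreal c * (ennreal (u x / c) * indicator (Z -` A \<inter> space M) x) \<partial>M)"
    using c by (intro nn_integral_cong) (auto simp: ennreal_mult'[symmetric] indicator_def)
  also have "\<dots> = ennreal c * (\<integral>\<^sup>+ x. ennreal (u x / c) * indicator (Z -` A \<inter> space M) x \<partial>M)"
    by (rule nn_integral_cmult) measurable
  also have "\<dots> = ennreal c * emeasure (distr ?D borel Z) A"
    by (simp add: emeasure_distr emeasure_density)
  finally show "emeasure (distr (density M (\<lambda>x. ennreal (u x))) borel Z) A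
           = ennreal c * emeasure (distr ?D borel Z) A" .
qed

lemma (in prob_space) claim1:
  fixes w w' Z :: "'a \<Rightarrow> real"
  assumes Z[measurable]: "Z \<in> borel_measurable M"
    and w: "integrable M w" "\<And>x. 0 \<le> w x" and w': "integrable M w'" "\<And>x. 0 \<le> w' x"
    and cs: "\<And>s. (\<integral>x. w x * cos (s * Z x) \<partial>M) = (\<integral>x. w' x * cos (s * Z x) \<partial>M)"
    and sn: "\<And>s. (\<integral>x. w x * sin (s * Z x) \<partial>M) = (\<integral>x. w' x * sin (s * Z x) \<partial>M)"
  shows "distr (density M (\<lambda>x. ennreal (w x))) borel Z = distr (density M (\<lambda>x. ennreal (w' x))) borel Z"
proof -
  have [measurable]: "w \<in> borel_measurable M" "w' \<in> borel_measurable M"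
    using w w' by (auto intro: borel_measurable_integrable)
  define c where "c = (\<integral>x. w x \<partial>M)"
  have c': "(\<integral>x. w' x \<partial>M) = c" using cs[of 0] by (simp add: c_def)
  have "c \<ge> 0" unfolding c_def using w by (intro integral_nonneg_AE) auto
  show ?thesis
  proof (cases "c = 0")
    case True
    have "AE x in M. w x = 0"
      using integral_nonneg_eq_0_iff_AE[of M w] w True by (auto simp: c_def)
    moreover have "AE x in M. w' x = 0"
      using integral_nonneg_eq_0_iff_AE[of M w'] w' True c' by auto
    ultimately have "density M (\<lambda>x. ennreal (w x)) = density M (\<lambda>x. ennreal (w' x))"
      by (intro density_cong) auto
    then show ?thesis by simp
  next
    case False
    with \<open>c \<ge> 0\<close> have cpos: "c > 0" by simp
    have "char (distr (density M (\<lambda>x. ennreal (w x / c))) borel Z) =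
          char (distr (density M (\<lambda>x. ennreal (w' x / c))) borel Z)"
      using char_weighted(2)[OF Z w c_def[symmetric] cpos] char_weighted(2)[OF Z w' c' cpos] cs sn
      by (intro ext) simp
    then have eq: "distr (density M (\<lambda>x. ennreal (w x / c))) borel Z =
          distr (density M (\<lambda>x. ennreal (w' x / c))) borel Z"
      by (intro Levy_uniqueness char_weighted(1)[OF Z w c_def[symmetric] cpos]
          char_weighted(1)[OF Z w' c' cpos])
    show ?thesis
    proof (rule measure_eqI)
      fix A assume "A \<in> sets (distr (density M (\<lambda>x. ennreal (w x))) borel Z)"
      then have A: "A \<in> sets borel" by simp
      show "emeasure (distr (density M (\<lambda>x. ennreal (w x))) borel Z) A =
            emeasure (distr (density M (\<lambda>x. ennreal (w' x))) borel Z) A"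
        using char_weighted(3)[OF Z w c_def[symmetric] cpos A] char_weighted(3)[OF Z w' c' cpos A] eq
        by simp
    qed simp
  qed
qed

lemma int_dom:
  fixes f h :: "'a \<Rightarrow> real"
  assumes "integrable M f" "h \<in> borel_measurable M" "\<And>x. \<bar>h x\<bar> \<le> f x"
  shows "integrable M h"
proof -
  have "\<And>x. \<bar>h x\<bar> \<le> \<bar>f x\<bar>" using assms(3) by (metis abs_ge_self order_trans)
  then show ?thesis using assms by (intro Bochner_Integration.integrable_bound[of M f h]) auto
qed

lemma int_w_bdd:
  fixes w g :: "'a \<Rightarrow> real"
  assumes "integrable M w" "\<And>x. 0 \<le> w x" "g \<in> borel_measurable M" "\<And>x. \<bar>g x\<bar> \<le> 1"
  shows "integrable M (\<lambda>x. w x * g x)"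
proof (rule int_dom[OF assms(1)])
  show "(\<lambda>x. w x * g x) \<in> borel_measurable M"
    using assms by (auto intro: borel_measurable_integrable)
  fix x show "\<bar>w x * g x\<bar> \<le> w x"
    using assms(2)[of x] assms(4)[of x] by (simp add: abs_mult mult_left_le)
qed

lemma lin2:
  fixes w a b :: "'a \<Rightarrow> real"
  assumes "integrable M w" "\<And>x. 0 \<le> w x" "a \<in> borel_measurable M" "\<And>x. \<bar>a x\<bar> \<le> 1"
     "b \<in> borel_measurable M" "\<And>x. \<bar>b x\<bar> \<le> 1"
  shows "(\<integral>x. w x * ((a x + b x) / 2) \<partial>M) = ((\<integral>x. w x * a x \<partial>M) + (\<integral>x. w x * b x \<partial>M)) / 2"
    and "(\<integral>x. w x * ((a x - b x) / 2) \<partial>M) = ((\<integral>x. w x * a x \<partial>M) - (\<integral>x. w x * b x \<partial>M)) / 2"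
proof -
  have ia: "integrable M (\<lambda>x. w x * a x)" and ib: "integrable M (\<lambda>x. w x * b x)"
    using assms by (auto intro: int_w_bdd)
  have "(\<integral>x. w x * ((a x + b x) / 2) \<partial>M) = (\<integral>x. (w x * a x + w x * b x) / 2 \<partial>M)"
    by (simp add: algebra_simps add_divide_distrib)
  also have "\<dots> = ((\<integral>x. w x * a x \<partial>M) + (\<integral>x. w x * b x \<partial>M)) / 2"
    using ia ib by simp
  finally show "(\<integral>x. w x * ((a x + b x) / 2) \<partial>M) = ((\<integral>x. w x * a x \<partial>M) + (\<integral>x. w x * b x \<partial>M)) / 2" .
  have "(\<integral>x. w x * ((a x - b x) / 2) \<partial>M) = (\<integral>x. (w x * a x - w x * b x) / 2 \<partial>M)"
    by (simp add: algebra_simps diff_divide_distrib)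
  also have "\<dots> = ((\<integral>x. w x * a x \<partial>M) - (\<integral>x. w x * b x \<partial>M)) / 2"
    using ia ib by simp
  finally show "(\<integral>x. w x * ((a x - b x) / 2) \<partial>M) = ((\<integral>x. w x * a x \<partial>M) - (\<integral>x. w x * b x \<partial>M)) / 2" .
qed

lemma sum_upd_Suc:
  "(\<Sum>j<Suc d. (t(d := s)) j * Z j x) = (\<Sum>j<d. t j * Z j x) + s * (Z d x :: real)"
  by (simp add: sum.lessThan_Suc)

lemma (in prob_space) claimD:
  fixes Z :: "nat \<Rightarrow> 'a \<Rightarrow> real" and A :: "nat \<Rightarrow> real set"
  assumes Z[measurable]: "\<And>j. Z j \<in> borel_measurable M"
    and A[measurable]: "\<And>j. A j \<in> sets borel"
  shows "integrable M w \<Longrightarrow> (\<And>x. 0 \<le> w x) \<Longrightarrow> integrable M w' \<Longrightarrow> (\<And>x. 0 \<le> w' x) \<Longrightarrow>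
     (\<And>t. (\<integral>x. w x * cos (\<Sum>j<d. t j * Z j x) \<partial>M) = (\<integral>x. w' x * cos (\<Sum>j<d. t j * Z j x) \<partial>M)) \<Longrightarrow>
     (\<And>t. (\<integral>x. w x * sin (\<Sum>j<d. t j * Z j x) \<partial>M) = (\<integral>x. w' x * sin (\<Sum>j<d. t j * Z j x) \<partial>M)) \<Longrightarrow>
     (\<integral>x. w x * (\<Prod>j<d. indicator (A j) (Z j x)) \<partial>M) = (\<integral>x. w' x * (\<Prod>j<d. indicator (A j) (Z j x)) \<partial>M)"
proof (induction d arbitrary: w w')
  case 0
  then show ?case by simp
next
  case (Suc d)
  note w = Suc.prems(1,2) and w' = Suc.prems(3,4)
  have [measurable]: "w \<in> borel_measurable M" "w' \<in> borel_measurable M"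
    using w w' by (auto intro: borel_measurable_integrable)
  define P where "P x = (\<Prod>j<d. indicator (A j) (Z j x) :: real)" for x
  have P[measurable]: "P \<in> borel_measurable M" unfolding P_def by measurable
  have P01: "0 \<le> P x" "P x \<le> 1" for x
    unfolding P_def by (auto intro!: prod_nonneg prod_le_1 simp: indicator_def)
  have key: "(\<integral>x. (w x * P x) * g x \<partial>M) = (\<integral>x. (w' x * P x) * g x \<partial>M)"
    if g[measurable]: "g \<in> borel_measurable M" and gb: "\<And>x. \<bar>g x\<bar> \<le> 1"
      and hc: "\<And>t. (\<integral>x. w x * (g x * cos (\<Sum>j<d. t j * Z j x)) \<partial>M) = (\<integral>x. w' x * (g x * cos (\<Sum>j<d. t j * Z j x)) \<partial>M)"
      and hs: "\<And>t. (\<integral>x. w x * (g x * sin (\<Sum>j<d. t j * Z j x)) \<partial>M) = (\<integral>x. w' x * (g x * sin (\<Sum>j<d. t j * Z j x)) \<partial>M)"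
    for g
  proof -
    define w1 where "w1 x = w x * max (g x) 0 + w' x * max (- g x) 0" for x
    define w2 where "w2 x = w' x * max (g x) 0 + w x * max (- g x) 0" for x
    have [measurable]: "w1 \<in> borel_measurable M" "w2 \<in> borel_measurable M"
      unfolding w1_def w2_def by measurable
    have b1: "\<bar>w1 x\<bar> \<le> w x + w' x" "\<bar>w2 x\<bar> \<le> w x + w' x" for x
    proof -
      have g1: "max (g x) 0 \<le> 1" "max (- g x) 0 \<le> 1" "0 \<le> max (g x) 0" "0 \<le> max (- g x) 0"
        using gb[of x] by auto
      have a: "w x * max (g x) 0 \<le> w x" "w' x * max (- g x) 0 \<le> w' x"
          "w' x * max (g x) 0 \<le> w' x" "w x * max (- g x) 0 \<le> w x"
        using g1 w(2)[of x] w'(2)[of x] by (auto intro: mult_left_le)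
      have b: "0 \<le> w x * max (g x) 0" "0 \<le> w' x * max (- g x) 0"
          "0 \<le> w' x * max (g x) 0" "0 \<le> w x * max (- g x) 0"
        using g1 w(2)[of x] w'(2)[of x] by auto
      show "\<bar>w1 x\<bar> \<le> w x + w' x" "\<bar>w2 x\<bar> \<le> w x + w' x"
        using a b unfolding w1_def w2_def by linarith+
    qed
    have ww: "integrable M (\<lambda>x. w x + w' x)" using w w' by simp
    have i1: "integrable M w1" "integrable M w2"
      by (rule int_dom[OF ww], measurable, rule b1)+
    have n1: "0 \<le> w1 x" "0 \<le> w2 x" for x
      using w(2)[of x] w'(2)[of x] by (auto simp: w1_def w2_def)
    have diff: "(\<integral>x. w1 x * h x \<partial>M) - (\<integral>x. w2 x * h x \<partial>M)
         = (\<integral>x. w x * (g x * h x) \<partial>M) - (\<integral>x. w' x * (g x * h x) \<partial>M)"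
      if [measurable]: "h \<in> borel_measurable M" and hb: "\<And>x. \<bar>h x\<bar> \<le> 1" for h
    proof -
      have gh: "\<bar>g x * h x\<bar> \<le> 1" for x using gb[of x] hb[of x]
        by (simp add: abs_mult mult_le_one)
      have "(\<integral>x. w1 x * h x \<partial>M) - (\<integral>x. w2 x * h x \<partial>M) = (\<integral>x. w1 x * h x - w2 x * h x \<partial>M)"
        using i1 n1 hb by (intro Bochner_Integration.integral_diff[symmetric] int_w_bdd) auto
      also have "\<dots> = (\<integral>x. w x * (g x * h x) - w' x * (g x * h x) \<partial>M)"
        by (intro Bochner_Integration.integral_cong) (auto simp: w1_def w2_def max_def algebra_simps)
      also have "\<dots> = (\<integral>x. w x * (g x * h x) \<partial>M) - (\<integral>x. w' x * (g x * h x) \<partial>M)"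
        using w w' gh by (intro Bochner_Integration.integral_diff int_w_bdd) auto
      finally show ?thesis .
    qed
    have "(\<integral>x. w1 x * P x \<partial>M) = (\<integral>x. w2 x * P x \<partial>M)"
      unfolding P_def
    proof (rule Suc.IH[OF i1(1) n1(1) i1(2) n1(2)])
      fix t
      show "(\<integral>x. w1 x * cos (\<Sum>j<d. t j * Z j x) \<partial>M) = (\<integral>x. w2 x * cos (\<Sum>j<d. t j * Z j x) \<partial>M)"
        using diff[of "\<lambda>x. cos (\<Sum>j<d. t j * Z j x)"] hc[of t] by simp
      show "(\<integral>x. w1 x * sin (\<Sum>j<d. t j * Z j x) \<partial>M) = (\<integral>x. w2 x * sin (\<Sum>j<d. t j * Z j x) \<partial>M)"
        using diff[of "\<lambda>x. sin (\<Sum>j<d. t j * Z j x)"] hs[of t] by simp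
    qed
    then have "(\<integral>x. w x * (g x * P x) \<partial>M) - (\<integral>x. w' x * (g x * P x) \<partial>M) = 0"
      using diff[of P] P01 by simp
    then show ?thesis by (simp add: ac_simps)
  qed
  have hcos: "(\<integral>x. (w x * P x) * cos (s * Z d x) \<partial>M) = (\<integral>x. (w' x * P x) * cos (s * Z d x) \<partial>M)" for s
  proof (rule key)
    fix t
    have e1: "cos (s * Z d x) * cos (\<Sum>j<d. t j * Z j x) =
       (cos (\<Sum>j<Suc d. (t(d:=s)) j * Z j x) + cos (\<Sum>j<Suc d. (t(d:=-s)) j * Z j x)) / 2" for x
      unfolding sum_upd_Suc by (simp add: cos_add cos_diff algebra_simps)
    have e2: "cos (s * Z d x) * sin (\<Sum>j<d. t j * Z j x) =
       (sin (\<Sum>j<Suc d. (t(d:=s)) j * Z j x) + sin (\<Sum>j<Suc d. (t(d:=-s)) j * Z j x)) / 2" for x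
      unfolding sum_upd_Suc by (simp add: sin_add sin_diff algebra_simps)
    show "(\<integral>x. w x * (cos (s * Z d x) * cos (\<Sum>j<d. t j * Z j x)) \<partial>M) = (\<integral>x. w' x * (cos (s * Z d x) * cos (\<Sum>j<d. t j * Z j x)) \<partial>M)"
      unfolding e1 using lin2(1)[OF w, of "\<lambda>x. cos (\<Sum>j<Suc d. (t(d:=s)) j * Z j x)" "\<lambda>x. cos (\<Sum>j<Suc d. (t(d:=-s)) j * Z j x)"]
        lin2(1)[OF w', of "\<lambda>x. cos (\<Sum>j<Suc d. (t(d:=s)) j * Z j x)" "\<lambda>x. cos (\<Sum>j<Suc d. (t(d:=-s)) j * Z j x)"]
        Suc.prems(5)[of "t(d:=s)"] Suc.prems(5)[of "t(d:=-s)"]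
      by simp
    show "(\<integral>x. w x * (cos (s * Z d x) * sin (\<Sum>j<d. t j * Z j x)) \<partial>M) = (\<integral>x. w' x * (cos (s * Z d x) * sin (\<Sum>j<d. t j * Z j x)) \<partial>M)"
      unfolding e2 using lin2(1)[OF w, of "\<lambda>x. sin (\<Sum>j<Suc d. (t(d:=s)) j * Z j x)" "\<lambda>x. sin (\<Sum>j<Suc d. (t(d:=-s)) j * Z j x)"]
        lin2(1)[OF w', of "\<lambda>x. sin (\<Sum>j<Suc d. (t(d:=s)) j * Z j x)" "\<lambda>x. sin (\<Sum>j<Suc d. (t(d:=-s)) j * Z j x)"]
        Suc.prems(6)[of "t(d:=s)"] Suc.prems(6)[of "t(d:=-s)"]
      by simp
  qed (auto)
  have hsin: "(\<integral>x. (w x * P x) * sin (s * Z d x) \<partial>M) = (\<integral>x. (w' x * P x) * sin (s * Z d x) \<partial>M)" for s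
  proof (rule key)
    fix t
    have e1: "sin (s * Z d x) * cos (\<Sum>j<d. t j * Z j x) =
       (sin (\<Sum>j<Suc d. (t(d:=s)) j * Z j x) - sin (\<Sum>j<Suc d. (t(d:=-s)) j * Z j x)) / 2" for x
      unfolding sum_upd_Suc by (simp add: sin_add sin_diff algebra_simps)
    have e2: "sin (s * Z d x) * sin (\<Sum>j<d. t j * Z j x) =
       (cos (\<Sum>j<Suc d. (t(d:=-s)) j * Z j x) - cos (\<Sum>j<Suc d. (t(d:=s)) j * Z j x)) / 2" for x
      unfolding sum_upd_Suc by (simp add: cos_add cos_diff algebra_simps)
    show "(\<integral>x. w x * (sin (s * Z d x) * cos (\<Sum>j<d. t j * Z j x)) \<partial>M) = (\<integral>x. w' x * (sin (s * Z d x) * cos (\<Sum>j<d. t j * Z j x)) \<partial>M)"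
      unfolding e1 using lin2(2)[OF w, of "\<lambda>x. sin (\<Sum>j<Suc d. (t(d:=s)) j * Z j x)" "\<lambda>x. sin (\<Sum>j<Suc d. (t(d:=-s)) j * Z j x)"]
        lin2(2)[OF w', of "\<lambda>x. sin (\<Sum>j<Suc d. (t(d:=s)) j * Z j x)" "\<lambda>x. sin (\<Sum>j<Suc d. (t(d:=-s)) j * Z j x)"]
        Suc.prems(6)[of "t(d:=s)"] Suc.prems(6)[of "t(d:=-s)"]
      by simp
    show "(\<integral>x. w x * (sin (s * Z d x) * sin (\<Sum>j<d. t j * Z j x)) \<partial>M) = (\<integral>x. w' x * (sin (s * Z d x) * sin (\<Sum>j<d. t j * Z j x)) \<partial>M)"
      unfolding e2 using lin2(2)[OF w, of "\<lambda>x. cos (\<Sum>j<Suc d. (t(d:=-s)) j * Z j x)" "\<lambda>x. cos (\<Sum>j<Suc d. (t(d:=s)) j * Z j x)"]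
        lin2(2)[OF w', of "\<lambda>x. cos (\<Sum>j<Suc d. (t(d:=-s)) j * Z j x)" "\<lambda>x. cos (\<Sum>j<Suc d. (t(d:=s)) j * Z j x)"]
        Suc.prems(5)[of "t(d:=s)"] Suc.prems(5)[of "t(d:=-s)"]
      by simp
  qed (auto)
  have bu: "\<bar>w x * P x\<bar> \<le> w x" "\<bar>w' x * P x\<bar> \<le> w' x" for x
    using P01[of x] w(2)[of x] w'(2)[of x] by (auto simp: abs_mult mult_left_le)
  have iu: "integrable M (\<lambda>x. w x * P x)" "integrable M (\<lambda>x. w' x * P x)"
    by (rule int_dom[OF w(1)], measurable, rule bu) (rule int_dom[OF w'(1)], measurable, rule bu)
  have nu: "0 \<le> w x * P x" "0 \<le> w' x * P x" for x using P01[of x] w(2)[of x] w'(2)[of x] by auto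
  have D: "distr (density M (\<lambda>x. ennreal (w x * P x))) borel (Z d) = distr (density M (\<lambda>x. ennreal (w' x * P x))) borel (Z d)"
    by (rule claim1[OF Z iu(1) nu(1) iu(2) nu(2) hcos hsin])
  have nn: "(\<integral>\<^sup>+x. ennreal (v x * P x * indicator (A d) (Z d x)) \<partial>M) =
      emeasure (distr (density M (\<lambda>x. ennreal (v x * P x))) borel (Z d)) (A d)"
    if [measurable]: "v \<in> borel_measurable M" for v
    by (simp add: emeasure_distr emeasure_density ennreal_mult'' indicator_def cong: nn_integral_cong_simp)
      (intro nn_integral_cong, auto simp: indicator_def)
  have "(\<integral>x. w x * (P x * indicator (A d) (Z d x)) \<partial>M) = (\<integral>x. w' x * (P x * indicator (A d) (Z d x)) \<partial>M)"
  proof -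
    have "(\<integral>x. w x * (P x * indicator (A d) (Z d x)) \<partial>M) = enn2real (\<integral>\<^sup>+x. ennreal (w x * P x * indicator (A d) (Z d x)) \<partial>M)"
      using nu by (subst integral_eq_nn_integral) (auto simp: ac_simps indicator_def)
    also have "\<dots> = enn2real (\<integral>\<^sup>+x. ennreal (w' x * P x * indicator (A d) (Z d x)) \<partial>M)"
      using nn[of w] nn[of w'] D by simp
    also have "\<dots> = (\<integral>x. w' x * (P x * indicator (A d) (Z d x)) \<partial>M)"
      using nu by (subst integral_eq_nn_integral) (auto simp: ac_simps indicator_def)
    finally show ?thesis .
  qed
  then show ?case by (simp add: P_def prod.lessThan_Suc)
qed

lemma (in prob_space) bint:
  fixes g :: "'a \<Rightarrow> real"
  assumes "g \<in> borel_measurable M" "\<And>x. \<bar>g x\<bar> \<le> c"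
  shows "integrable M g"
  using assms by (intro integrable_const_bound[where B=c]) auto

lemma (in prob_space) transfer1:
  fixes R u :: "'a \<Rightarrow> real" and f :: "real \<Rightarrow> real"
  assumes R[measurable]: "R \<in> borel_measurable M"
    and u[measurable]: "u \<in> borel_measurable M" and ub: "\<And>x. \<bar>u x\<bar> \<le> 1"
    and hc: "\<And>s. (\<integral>x. (1 + u x) * cos (s * R x) \<partial>M) = (\<integral>x. (1 + expectation u) * cos (s * R x) \<partial>M)"
    and hs: "\<And>s. (\<integral>x. (1 + u x) * sin (s * R x) \<partial>M) = (\<integral>x. (1 + expectation u) * sin (s * R x) \<partial>M)"
    and f[measurable]: "f \<in> borel_measurable borel" and fnn: "\<And>x. 0 \<le> f x"
    and fi: "integrable M (\<lambda>x. f (R x))"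
  shows "(\<integral>x. u x * f (R x) \<partial>M) = expectation u * expectation (\<lambda>x. f (R x))"
proof -
  have iu: "integrable M u" by (rule bint[OF u ub])
  have Eu: "\<bar>expectation u\<bar> \<le> 1"
  proof -
    have "\<bar>expectation u\<bar> \<le> expectation (\<lambda>x. \<bar>u x\<bar>)" using integral_norm_bound[of M u] by simp
    also have "\<dots> \<le> expectation (\<lambda>x. 1)" using ub iu by (intro integral_mono) auto
    finally show ?thesis using prob_space by simp
  qed
  have w1: "integrable M (\<lambda>x. 1 + u x)" "\<And>x. 0 \<le> 1 + u x" using iu ub by (auto simp: abs_le_iff, smt (verit) ub)
  have w2: "integrable M (\<lambda>x. 1 + expectation u)" "\<And>x. 0 \<le> 1 + expectation u" using Eu by (auto simp: abs_le_iff)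
  have D: "distr (density M (\<lambda>x. ennreal (1 + u x))) borel R = distr (density M (\<lambda>x. ennreal (1 + expectation u))) borel R"
    by (rule claim1[OF R w1 w2 hc hs])
  have nn: "(\<integral>\<^sup>+x. ennreal (f x) \<partial>distr (density M (\<lambda>x. ennreal (v x))) borel R) = (\<integral>\<^sup>+x. ennreal (v x * f (R x)) \<partial>M)"
    if [measurable]: "v \<in> borel_measurable M" and vn: "\<And>x. 0 \<le> v x" for v
    using vn fnn by (simp add: nn_integral_distr nn_integral_density ennreal_mult')
  have int1: "integrable M (\<lambda>x. (1 + u x) * f (R x))"
  proof (rule int_dom[OF integrable_mult_right[OF fi, of 2]])
    show "(\<lambda>x. (1 + u x) * f (R x)) \<in> borel_measurable M" by measurable
    fix x
    have a: "\<bar>1 + u x\<bar> \<le> 2" using ub[of x] by (auto simp: abs_le_iff)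
    have "\<bar>(1 + u x) * f (R x)\<bar> = \<bar>1 + u x\<bar> * f (R x)" using fnn[of "R x"] by (simp add: abs_mult)
    also have "\<dots> \<le> 2 * f (R x)" using a fnn[of "R x"] by (rule mult_right_mono)
    finally show "\<bar>(1 + u x) * f (R x)\<bar> \<le> 2 * f (R x)" .
  qed
  have int2: "integrable M (\<lambda>x. (1 + expectation u) * f (R x))" using fi by simp
  have "ennreal (\<integral>x. (1 + u x) * f (R x) \<partial>M) = (\<integral>\<^sup>+x. ennreal ((1 + u x) * f (R x)) \<partial>M)"
    using int1 w1 fnn by (intro nn_integral_eq_integral[symmetric]) auto
  also have "\<dots> = (\<integral>\<^sup>+x. ennreal ((1 + expectation u) * f (R x)) \<partial>M)"
    using nn[of "\<lambda>x. 1 + u x"] nn[of "\<lambda>x. 1 + expectation u"] D w1 w2 by simp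
  also have "\<dots> = ennreal (\<integral>x. (1 + expectation u) * f (R x) \<partial>M)"
    using int2 w2 fnn by (intro nn_integral_eq_integral) auto
  finally have "(\<integral>x. (1 + u x) * f (R x) \<partial>M) = (\<integral>x. (1 + expectation u) * f (R x) \<partial>M)"
    using w1 w2 fnn by (subst (asm) ennreal_inj) (auto intro!: integral_nonneg_AE)
  moreover have "(\<integral>x. (1 + u x) * f (R x) \<partial>M) = expectation (\<lambda>x. f (R x)) + (\<integral>x. u x * f (R x) \<partial>M)"
  proof -
    have "integrable M (\<lambda>x. u x * f (R x))"
      by (rule int_dom[OF fi]) (measurable, use ub fnn in \<open>auto simp: abs_mult intro!: mult_left_le_one_le\<close>)
    then show ?thesis using fi by (simp add: distrib_right)
  qed
  moreover have "(\<integral>x. (1 + expectation u) * f (R x) \<partial>M) = (1 + expectation u) * expectation (\<lambda>x. f (R x))"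
    by (rule integral_mult_right_zero)
  ultimately have "expectation (\<lambda>x. f (R x)) + (\<integral>x. u x * f (R x) \<partial>M) = (1 + expectation u) * expectation (\<lambda>x. f (R x))"
    by simp
  then show ?thesis by (simp add: algebra_simps)
qed

lemma (in prob_space) stepA:
  fixes R :: "'a \<Rightarrow> real" and V :: "nat \<Rightarrow> 'a \<Rightarrow> real" and f :: "real \<Rightarrow> real"
  assumes R[measurable]: "R \<in> borel_measurable M" and V[measurable]: "\<And>j. V j \<in> borel_measurable M"
    and H1: "\<And>s t. expectation (\<lambda>x. cos (s * R x + (\<Sum>j<d. t j * V j x))) =
                  expectation (\<lambda>x. cos (s * R x)) * expectation (\<lambda>x. cos (\<Sum>j<d. t j * V j x))"
    and H2: "\<And>s t. expectation (\<lambda>x. sin (s * R x + (\<Sum>j<d. t j * V j x))) = 0"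
    and f[measurable]: "f \<in> borel_measurable borel" and fnn: "\<And>x. 0 \<le> f x"
    and fi: "integrable M (\<lambda>x. f (R x))"
  shows "(\<integral>x. cos (\<Sum>j<d. t j * V j x) * f (R x) \<partial>M) = expectation (\<lambda>x. cos (\<Sum>j<d. t j * V j x)) * expectation (\<lambda>x. f (R x))"
    and "(\<integral>x. sin (\<Sum>j<d. t j * V j x) * f (R x) \<partial>M) = expectation (\<lambda>x. sin (\<Sum>j<d. t j * V j x)) * expectation (\<lambda>x. f (R x))"
proof -
  define L where "L x = (\<Sum>j<d. t j * V j x)" for x
  have [measurable]: "L \<in> borel_measurable M" unfolding L_def by measurable
  have L': "(\<Sum>j<d. (- t j) * V j x) = - L x" for x by (simp add: L_def sum_negf)
  have H1': "expectation (\<lambda>x. cos (s * R x + L x)) = expectation (\<lambda>x. cos (s * R x)) * expectation (\<lambda>x. cos (L x))"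
    and H1'': "expectation (\<lambda>x. cos (s * R x - L x)) = expectation (\<lambda>x. cos (s * R x)) * expectation (\<lambda>x. cos (L x))"
    and H2': "expectation (\<lambda>x. sin (s * R x + L x)) = 0"
    and H2'': "expectation (\<lambda>x. sin (s * R x - L x)) = 0"
    and H3: "expectation (\<lambda>x. sin (s * R x)) = 0" and H4: "expectation (\<lambda>x. sin (L x)) = 0" for s
  proof -
    show "expectation (\<lambda>x. cos (s * R x + L x)) = expectation (\<lambda>x. cos (s * R x)) * expectation (\<lambda>x. cos (L x))"
      using H1[of s t] by (simp add: L_def)
    show "expectation (\<lambda>x. cos (s * R x - L x)) = expectation (\<lambda>x. cos (s * R x)) * expectation (\<lambda>x. cos (L x))"
      using H1[of s "\<lambda>j. - t j"] by (simp add: L_def sum_negf)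
    show "expectation (\<lambda>x. sin (s * R x + L x)) = 0" using H2[of s t] by (simp add: L_def)
    show "expectation (\<lambda>x. sin (s * R x - L x)) = 0" using H2[of s "\<lambda>j. - t j"] by (simp add: L_def sum_negf)
    show "expectation (\<lambda>x. sin (s * R x)) = 0" using H2[of s "\<lambda>j. 0"] by simp
    show "expectation (\<lambda>x. sin (L x)) = 0" using H2[of 0 t] by (simp add: L_def)
  qed
  have one: "integrable M (\<lambda>x. 1::real)" "\<And>x. 0 \<le> (1::real)" by auto
  have ib: "integrable M (\<lambda>x. g x)" if "g \<in> borel_measurable M" "\<And>x. \<bar>g x\<bar> \<le> 1" for g :: "'a \<Rightarrow> real"
    using that by (rule bint)
  have split: "(\<integral>x. (1 + a x) * b x \<partial>M) = (\<integral>x. b x \<partial>M) + (\<integral>x. a x * b x \<partial>M)"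
    if [measurable]: "a \<in> borel_measurable M" "b \<in> borel_measurable M" and "\<And>x. \<bar>a x\<bar> \<le> 1" "\<And>x. \<bar>b x\<bar> \<le> 1"
    for a b :: "'a \<Rightarrow> real"
  proof -
    have "integrable M b" "integrable M (\<lambda>x. a x * b x)"
      using that by (auto intro!: ib simp: abs_mult mult_le_one)
    then show ?thesis by (simp add: distrib_right)
  qed
  have half: "(\<integral>x. a x * b x \<partial>M) = ((\<integral>x. c x \<partial>M) + (\<integral>x. e x \<partial>M)) / 2"
    if "\<And>x. a x * b x = (c x + e x) / 2" "c \<in> borel_measurable M" "e \<in> borel_measurable M"
       "\<And>x. \<bar>c x\<bar> \<le> 1" "\<And>x. \<bar>e x\<bar> \<le> 1" for a b c e :: "'a \<Rightarrow> real"
  proof -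
    have "(\<integral>x. a x * b x \<partial>M) = (\<integral>x. 1 * ((c x + e x) / 2) \<partial>M)" using that(1) by (intro Bochner_Integration.integral_cong) auto
    also have "\<dots> = ((\<integral>x. 1 * c x \<partial>M) + (\<integral>x. 1 * e x \<partial>M)) / 2"
      by (rule lin2(1)[OF one]) (use that in auto)
    finally show ?thesis by simp
  qed
  have halfm: "(\<integral>x. a x * b x \<partial>M) = ((\<integral>x. c x \<partial>M) - (\<integral>x. e x \<partial>M)) / 2"
    if "\<And>x. a x * b x = (c x - e x) / 2" "c \<in> borel_measurable M" "e \<in> borel_measurable M"
       "\<And>x. \<bar>c x\<bar> \<le> 1" "\<And>x. \<bar>e x\<bar> \<le> 1" for a b c e :: "'a \<Rightarrow> real"
  proof -
    have "(\<integral>x. a x * b x \<partial>M) = (\<integral>x. 1 * ((c x - e x) / 2) \<partial>M)" using that(1) by (intro Bochner_Integration.integral_cong) auto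
    also have "\<dots> = ((\<integral>x. 1 * c x \<partial>M) - (\<integral>x. 1 * e x \<partial>M)) / 2"
      by (rule lin2(2)[OF one]) (use that in auto)
    finally show ?thesis by simp
  qed
  have cm: "(\<integral>x. (1 + c) * g x \<partial>M) = (1 + c) * (\<integral>x. g x \<partial>M)" for c and g :: "'a \<Rightarrow> real"
    by (rule integral_mult_right_zero)
  show "(\<integral>x. cos (\<Sum>j<d. t j * V j x) * f (R x) \<partial>M) = expectation (\<lambda>x. cos (\<Sum>j<d. t j * V j x)) * expectation (\<lambda>x. f (R x))"
    unfolding L_def[symmetric]
  proof (rule transfer1[OF R _ _ _ _ f fnn fi])
    fix s
    have e1: "cos (L x) * cos (s * R x) = (cos (s * R x + L x) + cos (s * R x - L x)) / 2" for x
      by (simp add: cos_add cos_diff)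
    have e2: "cos (L x) * sin (s * R x) = (sin (s * R x + L x) + sin (s * R x - L x)) / 2" for x
      by (simp add: sin_add sin_diff)
    have X: "(\<integral>x. (1 + cos (L x)) * cos (s * R x) \<partial>M) = expectation (\<lambda>x. cos (s * R x)) + expectation (\<lambda>x. cos (s * R x)) * expectation (\<lambda>x. cos (L x))"
      using split[of "\<lambda>x. cos (L x)" "\<lambda>x. cos (s * R x)"] half[OF e1] H1'[of s] H1''[of s] by simp
    show "(\<integral>x. (1 + cos (L x)) * cos (s * R x) \<partial>M) = (\<integral>x. (1 + expectation (\<lambda>x. cos (L x))) * cos (s * R x) \<partial>M)"
      unfolding X cm by (simp add: algebra_simps)
    have X: "(\<integral>x. (1 + cos (L x)) * sin (s * R x) \<partial>M) = 0"
      using split[of "\<lambda>x. cos (L x)" "\<lambda>x. sin (s * R x)"] half[OF e2] H2'[of s] H2''[of s] H3[of s] by simp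
    show "(\<integral>x. (1 + cos (L x)) * sin (s * R x) \<partial>M) = (\<integral>x. (1 + expectation (\<lambda>x. cos (L x))) * sin (s * R x) \<partial>M)"
      unfolding X cm H3 by simp
  qed auto
  show "(\<integral>x. sin (\<Sum>j<d. t j * V j x) * f (R x) \<partial>M) = expectation (\<lambda>x. sin (\<Sum>j<d. t j * V j x)) * expectation (\<lambda>x. f (R x))"
    unfolding L_def[symmetric]
  proof (rule transfer1[OF R _ _ _ _ f fnn fi])
    fix s
    have e1: "sin (L x) * cos (s * R x) = (sin (s * R x + L x) - sin (s * R x - L x)) / 2" for x
      by (simp add: sin_add sin_diff)
    have e2: "sin (L x) * sin (s * R x) = (cos (s * R x - L x) - cos (s * R x + L x)) / 2" for x
      by (simp add: cos_add cos_diff)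
    have X: "(\<integral>x. (1 + sin (L x)) * cos (s * R x) \<partial>M) = expectation (\<lambda>x. cos (s * R x))"
      using split[of "\<lambda>x. sin (L x)" "\<lambda>x. cos (s * R x)"] halfm[OF e1] H2'[of s] H2''[of s] by simp
    show "(\<integral>x. (1 + sin (L x)) * cos (s * R x) \<partial>M) = (\<integral>x. (1 + expectation (\<lambda>x. sin (L x))) * cos (s * R x) \<partial>M)"
      unfolding X cm H4 by simp
    have X: "(\<integral>x. (1 + sin (L x)) * sin (s * R x) \<partial>M) = 0"
      using split[of "\<lambda>x. sin (L x)" "\<lambda>x. sin (s * R x)"] halfm[OF e2] H1'[of s] H1''[of s] H3[of s] by simp
    show "(\<integral>x. (1 + sin (L x)) * sin (s * R x) \<partial>M) = (\<integral>x. (1 + expectation (\<lambda>x. sin (L x))) * sin (s * R x) \<partial>M)"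
      unfolding X cm H3 H4 by simp
  qed auto
qed

lemma (in prob_space) indep_main:
  fixes R :: "'a \<Rightarrow> real" and V :: "nat \<Rightarrow> 'a \<Rightarrow> real" and f :: "real \<Rightarrow> real"
  assumes R[measurable]: "R \<in> borel_measurable M" and V[measurable]: "\<And>j. V j \<in> borel_measurable M"
    and H1: "\<And>s t. expectation (\<lambda>x. cos (s * R x + (\<Sum>j<d. t j * V j x))) =
                  expectation (\<lambda>x. cos (s * R x)) * expectation (\<lambda>x. cos (\<Sum>j<d. t j * V j x))"
    and H2: "\<And>s t. expectation (\<lambda>x. sin (s * R x + (\<Sum>j<d. t j * V j x))) = 0"
    and f[measurable]: "f \<in> borel_measurable borel" and fnn: "\<And>x. 0 \<le> f x"
    and fi: "integrable M (\<lambda>x. f (R x))"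
    and S: "S \<in> sigma_sets (space M) {V j -` A \<inter> space M | j A. j < d \<and> A \<in> sets borel}"
  shows "(\<integral>x. indicator S x * f (R x) \<partial>M) = expectation (\<lambda>x. f (R x)) * prob S"
proof -
  define c where "c = expectation (\<lambda>x. f (R x))"
  have c0: "0 \<le> c" unfolding c_def using fnn by (intro integral_nonneg_AE) auto
  define G' where "G' = {{x \<in> space M. \<forall>j<d. V j x \<in> A j} | A. \<forall>j. A j \<in> sets borel}"
  have G'M: "G' \<subseteq> sets M" unfolding G'_def by auto
  have G'P: "G' \<subseteq> Pow (space M)" unfolding G'_def by auto
  have memG: "V j -` A \<inter> space M \<in> G'" if "j < d" "A \<in> sets (borel :: real measure)" for j A
  proof -
    define B where "B i = (if i = j then A else UNIV)" for i
    have B1: "B j = A" and B2: "\<And>i. i \<noteq> j \<Longrightarrow> B i = UNIV" by (auto simp: B_def)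
    have "V j -` A \<inter> space M = {x \<in> space M. \<forall>i<d. V i x \<in> B i}"
    proof (intro set_eqI iffI)
      fix x assume "x \<in> V j -` A \<inter> space M"
      then show "x \<in> {x \<in> space M. \<forall>i<d. V i x \<in> B i}"
      proof -
        have x: "x \<in> space M" "V j x \<in> A" using \<open>x \<in> V j -` A \<inter> space M\<close> by auto
        have "V i x \<in> B i" for i
        proof (cases "i = j")
          case True then show ?thesis using x B1 by simp
        next
          case False then show ?thesis using B2[OF False] by simp
        qed
        then show ?thesis using x by simp
      qed
    next
      fix x assume "x \<in> {x \<in> space M. \<forall>i<d. V i x \<in> B i}"
      then show "x \<in> V j -` A \<inter> space M" using that(1) B1 by auto
    qed
    moreover have "\<forall>i. B i \<in> sets borel" using that(2) by (auto simp: B_def)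
    ultimately show ?thesis unfolding G'_def by blast
  qed
  have "{V j -` A \<inter> space M | j A. j < d \<and> A \<in> sets borel} \<subseteq> G'"
    using memG by blast
  then have S': "S \<in> sigma_sets (space M) G'" using S sigma_sets_mono' by blast
  have sig: "sigma_sets (space M) G' \<subseteq> sets M" using G'M by (rule sets.sigma_sets_subset)
  define N1 where "N1 = density M (\<lambda>x. ennreal (f (R x)))"
  define N2 where "N2 = density M (\<lambda>x. ennreal c)"
  have [simp]: "sets N1 = sets M" "sets N2 = sets M" "space N1 = space M" "space N2 = space M"
    by (auto simp: N1_def N2_def)
  have e1: "emeasure N1 A = ennreal (\<integral>x. indicator A x * f (R x) \<partial>M)" if A[measurable]: "A \<in> sets M" for A
  proof -
    have "emeasure N1 A = (\<integral>\<^sup>+x. ennreal (indicator A x * f (R x)) \<partial>M)"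
      unfolding N1_def by (subst emeasure_density) (auto intro!: nn_integral_cong simp: indicator_def)
    also have "\<dots> = ennreal (\<integral>x. indicator A x * f (R x) \<partial>M)"
      using fnn integrable_real_mult_indicator[OF A fi] by (intro nn_integral_eq_integral) (auto simp: indicator_def mult.commute)
    finally show ?thesis .
  qed
  have e2: "emeasure N2 A = ennreal (c * prob A)" if A[measurable]: "A \<in> sets M" for A
  proof -
    have "emeasure N2 A = (\<integral>\<^sup>+x. ennreal c * indicator A x \<partial>M)"
      unfolding N2_def by (subst emeasure_density) auto
    also have "\<dots> = ennreal c * emeasure M A" by (rule nn_integral_cmult_indicator) simp
    finally show ?thesis using c0 by (simp add: emeasure_eq_measure ennreal_mult)
  qed
  have basicG: "emeasure N1 B = emeasure N2 B" if "B \<in> G'" for B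
  proof -
    obtain A where A: "\<And>j. A j \<in> sets borel" and B: "B = {x \<in> space M. \<forall>j<d. V j x \<in> A j}"
      using \<open>B \<in> G'\<close> unfolding G'_def by blast
    have [measurable]: "B \<in> sets M" using that G'M by auto
    have ind: "indicator B x = (\<Prod>j<d. indicator (A j) (V j x) :: real)" if "x \<in> space M" for x
      using that unfolding B by (auto simp: indicator_def prod_zero_iff)
    have "(\<integral>x. indicator B x * f (R x) \<partial>M) = (\<integral>x. f (R x) * (\<Prod>j<d. indicator (A j) (V j x)) \<partial>M)"
      by (intro Bochner_Integration.integral_cong) (auto simp: ind mult.commute)
    also have "\<dots> = (\<integral>x. c * (\<Prod>j<d. indicator (A j) (V j x)) \<partial>M)"
    proof (rule claimD[OF V A fi fnn])
      show "integrable M (\<lambda>x. c)" by simp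
      show "0 \<le> c" by (rule c0)
      fix t
      show "(\<integral>x. f (R x) * cos (\<Sum>j<d. t j * V j x) \<partial>M) = (\<integral>x. c * cos (\<Sum>j<d. t j * V j x) \<partial>M)"
        using stepA(1)[OF R V H1 H2 f fnn fi, of t] by (simp add: c_def mult.commute)
      show "(\<integral>x. f (R x) * sin (\<Sum>j<d. t j * V j x) \<partial>M) = (\<integral>x. c * sin (\<Sum>j<d. t j * V j x) \<partial>M)"
        using stepA(2)[OF R V H1 H2 f fnn fi, of t] by (simp add: c_def mult.commute)
    qed
    also have "\<dots> = (\<integral>x. c * indicator B x \<partial>M)"
      by (intro Bochner_Integration.integral_cong) (auto simp: ind)
    also have "\<dots> = c * prob B" by simp
    finally show ?thesis using e1 e2 by simp
  qed
  have sp: "space M \<in> G'" unfolding G'_def by (rule CollectI, rule exI[of _ "\<lambda>_. UNIV"]) auto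
  have fin1: "emeasure N1 A \<noteq> \<infinity>" if "A \<in> sets M" for A using e1[OF that] by simp
  have fin2: "emeasure N2 A \<noteq> \<infinity>" if "A \<in> sets M" for A using e2[OF that] by simp
  have IS: "Int_stable G'" unfolding Int_stable_def G'_def
  proof safe
    fix A B :: "nat \<Rightarrow> real set" assume "\<forall>j. A j \<in> sets borel" "\<forall>j. B j \<in> sets borel"
    then show "\<exists>C. {x \<in> space M. \<forall>j<d. V j x \<in> A j} \<inter> {x \<in> space M. \<forall>j<d. V j x \<in> B j} =
                 {x \<in> space M. \<forall>j<d. V j x \<in> C j} \<and> (\<forall>j. C j \<in> sets borel)"
      by (intro exI[of _ "\<lambda>j. A j \<inter> B j"]) auto
  qed
  have "emeasure N1 S = emeasure N2 S"
    using IS G'P S'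
  proof (induction rule: sigma_sets_induct_disjoint)
    case (basic A) then show ?case by (rule basicG)
  next
    case empty show ?case by simp
  next
    case (compl A)
    have A: "A \<in> sets M" using compl(1) sig by auto
    show ?case
      using emeasure_compl[of A N1] emeasure_compl[of A N2] A fin1 fin2 compl(2) basicG[OF sp] by simp
  next
    case (union A)
    have A: "range A \<subseteq> sets M" using union(2) sig by auto
    show ?case
      using suminf_emeasure[of A N1] suminf_emeasure[of A N2] A union(1,3) by simp
  qed
  moreover have "S \<in> sets M" using S' sig by auto
  ultimately have "ennreal (\<integral>x. indicator S x * f (R x) \<partial>M) = ennreal (c * prob S)"
    using e1 e2 by simp
  moreover have "0 \<le> (\<integral>x. indicator S x * f (R x) \<partial>M)" using fnn by (intro integral_nonneg_AE) (auto simp: indicator_def)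
  moreover have "0 \<le> c * prob S" using c0 by simp
  ultimately show ?thesis by (simp add: c_def)
qed


lemma normal_mgf_identity:
  assumes "0 < \<sigma>"
  shows "normal_density 0 \<sigma> x * exp (\<theta> * x) = exp (\<theta>^2 * \<sigma>^2 / 2) * normal_density (\<theta> * \<sigma>^2) \<sigma> x"
proof -
  have "- x\<^sup>2 / (2 * \<sigma>\<^sup>2) + \<theta> * x = \<theta>^2 * \<sigma>^2 / 2 + (- (x - \<theta> * \<sigma>\<^sup>2)\<^sup>2 / (2 * \<sigma>\<^sup>2))"
    using assms by (simp add: field_simps power2_eq_square)
  then show ?thesis
    unfolding normal_density_def by (simp add: exp_add[symmetric] mult.commute mult.left_commute)
qed

lemma (in prob_space) gauss_facts:
  fixes Y :: "'a \<Rightarrow> real"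
  assumes g: "gaussian_rv M Y" and iY: "integrable M Y" "expectation Y = 0"
    and iY2: "integrable M (\<lambda>x. (Y x)^2)"
  shows "expectation (\<lambda>x. cos (Y x)) = exp (- expectation (\<lambda>x. (Y x)^2) / 2)"
    and "expectation (\<lambda>x. sin (Y x)) = 0"
    and "integrable M (\<lambda>x. exp (\<theta> * Y x))"
    and "expectation (\<lambda>x. exp (\<theta> * Y x)) = exp (\<theta>^2 * expectation (\<lambda>x. (Y x)^2) / 2)"
proof -
  have Ym[measurable]: "Y \<in> borel_measurable M" using g by (simp add: gaussian_rv_def)
  consider (const) c where "AE x in M. Y x = c"
    | (normal) \<mu> \<sigma> where "\<sigma> > 0" "distributed M lborel Y (normal_density \<mu> \<sigma>)"
    using g unfolding gaussian_rv_def by blast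
  then have "expectation (\<lambda>x. cos (Y x)) = exp (- expectation (\<lambda>x. (Y x)^2) / 2) \<and>
    expectation (\<lambda>x. sin (Y x)) = 0 \<and> integrable M (\<lambda>x. exp (\<theta> * Y x)) \<and>
    expectation (\<lambda>x. exp (\<theta> * Y x)) = exp (\<theta>^2 * expectation (\<lambda>x. (Y x)^2) / 2)"
  proof cases
    case const
    have "expectation Y = c" using integral_cong_AE[OF Ym _ const] prob_space by simp
    with iY have c0: "c = 0" by simp
    with const have Y0: "AE x in M. Y x = 0" by simp
    have e: "expectation (\<lambda>x. h (Y x)) = h 0" if [measurable]: "h \<in> borel_measurable borel" for h :: "real \<Rightarrow> real"
    proof -
      have "expectation (\<lambda>x. h (Y x)) = expectation (\<lambda>x. h 0)"
        by (rule integral_cong_AE) (use Y0 in auto)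
      then show ?thesis using lebesgue_integral_const[of M "h 0"] prob_space by simp
    qed
    have "integrable M (\<lambda>x. exp (\<theta> * Y x))"
      by (rule integrable_cong_AE_imp[where g="\<lambda>x. 1"]) (use Y0 in auto)
    then show ?thesis using e[of cos] e[of sin] e[of "\<lambda>y. y^2"] e[of "\<lambda>y. exp (\<theta> * y)"] by simp
  next
    case normal
    have "\<mu> = 0" using normal_distributed_expectation[OF normal] iY by simp
    with normal have D: "distributed M lborel Y (normal_density 0 \<sigma>)" by simp
    have var: "expectation (\<lambda>x. (Y x)^2) = \<sigma>^2"
      using normal_distributed_variance[OF normal(1) D] iY by simp
    have DZ: "distributed M lborel (\<lambda>x. (Y x - 0) / \<sigma>) std_normal_density"
      using normal_standard_normal_convert[OF normal(1)] D by simp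
    have Zm[measurable]: "(\<lambda>x. Y x / \<sigma>) \<in> measurable M lborel" by simp
    have "distr M lborel (\<lambda>x. Y x / \<sigma>) = std_normal_distribution"
      using DZ by (simp add: distributed_def)
    then have ch: "char (distr M lborel (\<lambda>x. Y x / \<sigma>)) \<sigma> = complex_of_real (exp (- (\<sigma>^2) / 2))"
      by (simp add: char_std_normal_distribution)
    have ii: "integrable M (\<lambda>x. iexp (\<sigma> * (Y x / \<sigma>)))"
      by (rule integrable_iexp) auto
    have cs: "char (distr M lborel (\<lambda>x. Y x / \<sigma>)) \<sigma> = (\<integral>x. iexp (\<sigma> * (Y x / \<sigma>)) \<partial>M)"
      unfolding char_def by (subst integral_distr) auto
    have "expectation (\<lambda>x. cos (Y x)) = Re (\<integral>x. iexp (\<sigma> * (Y x / \<sigma>)) \<partial>M)"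
      using normal(1) by (subst integral_Re[OF ii, symmetric]) (simp add: Re_exp)
    also have "\<dots> = exp (- (\<sigma>^2) / 2)" using ch cs by simp
    finally have c1: "expectation (\<lambda>x. cos (Y x)) = exp (- expectation (\<lambda>x. (Y x)^2) / 2)" using var by simp
    have "expectation (\<lambda>x. sin (Y x)) = Im (\<integral>x. iexp (\<sigma> * (Y x / \<sigma>)) \<partial>M)"
      using normal(1) by (subst integral_Im[OF ii, symmetric]) (simp add: Im_exp)
    also have "\<dots> = 0" using ch cs by simp
    finally have c2: "expectation (\<lambda>x. sin (Y x)) = 0" .
    have nn: "\<And>x. 0 \<le> normal_density 0 \<sigma> x" by simp
    have iL: "integrable lborel (\<lambda>x. normal_density 0 \<sigma> x * exp (\<theta> * x))"
      unfolding normal_mgf_identity[OF normal(1)] using integrable_normal_density[OF normal(1)] by simp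
    have c3: "integrable M (\<lambda>x. exp (\<theta> * Y x))"
      using distributed_integrable[OF D, of "\<lambda>x. exp (\<theta> * x)"] iL by simp
    have "expectation (\<lambda>x. exp (\<theta> * Y x)) = (\<integral>x. normal_density 0 \<sigma> x * exp (\<theta> * x) \<partial>lborel)"
      using distributed_integral[OF D, of "\<lambda>x. exp (\<theta> * x)"] by simp
    also have "\<dots> = exp (\<theta>^2 * \<sigma>^2 / 2)"
      unfolding normal_mgf_identity[OF normal(1)] using integral_normal_density[OF normal(1)] by simp
    finally show ?thesis using c1 c2 c3 var by simp
  qed
  then show "expectation (\<lambda>x. cos (Y x)) = exp (- expectation (\<lambda>x. (Y x)^2) / 2)"
    and "expectation (\<lambda>x. sin (Y x)) = 0"
    and "integrable M (\<lambda>x. exp (\<theta> * Y x))"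
    and "expectation (\<lambda>x. exp (\<theta> * Y x)) = exp (\<theta>^2 * expectation (\<lambda>x. (Y x)^2) / 2)" by auto
qed


lemma theta_ell:
  "theta_plus H \<delta> \<rho> n m * ell H \<delta> (n+m) = \<rho> / 2 * 2 powr (2 * real (n+m) * \<delta>)"
proof -
  have "2 powr (real (n+m) * (H + \<delta>)) * 2 powr (- (H - \<delta>) * real (n+m)) = 2 powr (2 * real (n+m) * \<delta>)"
    by (simp add: powr_add[symmetric] algebra_simps)
  then show ?thesis unfolding theta_plus_def ell_def by (simp add: mult.assoc)
qed

lemma theta_var:
  "(theta_plus H \<delta> \<rho> n m)^2 * 2 powr (- 2 * H * real (n+m)) = \<rho>^2 / 4 * 2 powr (2 * real (n+m) * \<delta>)"
proof -
  have "(2 powr (real (n+m) * (H + \<delta>)))^2 * 2 powr (- 2 * H * real (n+m)) = 2 powr (2 * real (n+m) * \<delta>)"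
    by (simp add: powr_add[symmetric] powr_realpow[symmetric] powr_powr algebra_simps power2_eq_square)
  then show ?thesis unfolding theta_plus_def by (simp add: power_mult_distrib power_divide mult.assoc)
qed

lemma inv_gn:
  assumes "0 < Zn \<rho> \<delta> n"
  shows "inverse (gn \<rho> \<delta> n m) * 2 ^ (n+m) = Zn \<rho> \<delta> n * exp (\<rho>^2 / 8 * 2 powr (2 * real (n+m) * \<delta>))"
  using assms unfolding gn_def zterm_def by (simp add: field_simps exp_minus)

lemma pointwise_bound:
  fixes X p \<sigma>2 :: real
  assumes \<rho>: "0 < \<rho>" and Z: "0 < Zn \<rho> \<delta> n" "Zn \<rho> \<delta> n \<le> 1"
    and p: "\<bar>p\<bar> \<le> \<rho> / 2 * ell H \<delta> (n+m)"
    and s: "0 \<le> \<sigma>2" "\<sigma>2 \<le> 2 powr (- 2 * H * real (n+m))"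
    and Xip: "Xp = exp (theta_plus H \<delta> \<rho> n m * p) * exp ((theta_plus H \<delta> \<rho> n m)^2 * \<sigma>2 / 2)"
    and Xim: "Xm = exp (theta_minus H \<delta> \<rho> n m * p) * exp ((theta_minus H \<delta> \<rho> n m)^2 * \<sigma>2 / 2)"
  shows "inverse (gn \<rho> \<delta> n m) * 2 ^ (n+m) * exp (- theta_plus H \<delta> \<rho> n m * X + ln Xp)
          * (if X > \<rho> * ell H \<delta> (n+m) then 1 else 0) \<le> 1"
    and "inverse (gn \<rho> \<delta> n m) * 2 ^ (n+m) * exp (- theta_minus H \<delta> \<rho> n m * X + ln Xm)
          * (if X < - \<rho> * ell H \<delta> (n+m) then 1 else 0) \<le> 1"
proof -
  define \<theta> where "\<theta> = theta_plus H \<delta> \<rho> n m"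
  define ll where "ll = ell H \<delta> (n+m)"
  define Y where "Y = 2 powr (2 * real (n+m) * \<delta>)"
  define Z where "Z = Zn \<rho> \<delta> n"
  have th: "0 < \<theta>" using \<rho> by (simp add: \<theta>_def theta_plus_def)
  have tl: "\<theta> * ll = \<rho> / 2 * Y" using theta_ell by (simp add: \<theta>_def ll_def Y_def)
  have tv: "\<theta>^2 * \<sigma>2 \<le> \<rho>^2 / 4 * Y"
  proof -
    have "\<theta>^2 * \<sigma>2 \<le> \<theta>^2 * 2 powr (- 2 * H * real (n+m))" using s by (intro mult_left_mono) auto
    also have "\<dots> = \<rho>^2 / 4 * Y" using theta_var by (simp add: \<theta>_def Y_def)
    finally show ?thesis .
  qed
  have ig: "inverse (gn \<rho> \<delta> n m) * 2 ^ (n+m) = Z * exp (\<rho>^2 / 8 * Y)"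
    using inv_gn[OF Z(1)] by (simp add: Z_def Y_def)
  have key: "Z * exp (\<rho>^2 / 8 * Y + E) \<le> 1" if "E \<le> - (\<rho>^2 / 8 * Y)" for E
  proof -
    have "exp (\<rho>^2 / 8 * Y + E) \<le> 1" using that by simp
    moreover have "Z \<le> 1" using Z by (simp add: Z_def)
    ultimately show ?thesis by (intro mult_le_one) auto
  qed
  have pl: "\<theta> * p \<le> \<theta> * (\<rho> / 2 * ll)" "- (\<theta> * (\<rho> / 2 * ll)) \<le> \<theta> * p"
  proof -
    have a: "p \<le> \<rho> / 2 * ll" "- (\<rho> / 2 * ll) \<le> p" using p by (auto simp: ll_def abs_le_iff)
    show "\<theta> * p \<le> \<theta> * (\<rho> / 2 * ll)" using a(1) th by (intro mult_left_mono) auto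
    have "\<theta> * (- (\<rho> / 2 * ll)) \<le> \<theta> * p" using a(2) th by (intro mult_left_mono) auto
    then show "- (\<theta> * (\<rho> / 2 * ll)) \<le> \<theta> * p" by simp
  qed
  show "inverse (gn \<rho> \<delta> n m) * 2 ^ (n+m) * exp (- theta_plus H \<delta> \<rho> n m * X + ln Xp)
          * (if X > \<rho> * ell H \<delta> (n+m) then 1 else 0) \<le> 1"
  proof (cases "X > \<rho> * ll")
    case True
    have lnX: "ln Xp = \<theta> * p + \<theta>^2 * \<sigma>2 / 2" using Xip by (simp add: \<theta>_def ln_mult)
    have "\<theta> * X \<ge> \<theta> * (\<rho> * ll)" using True th by (intro mult_left_mono) auto
    then have "- \<theta> * X + ln Xp \<le> - (\<rho>^2 / 8 * Y)"
      using lnX pl tl tv by (simp add: power2_eq_square algebra_simps) 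
    then have "Z * exp (\<rho>^2 / 8 * Y + (- \<theta> * X + ln Xp)) \<le> 1" by (rule key)
    then show ?thesis using True ig by (simp add: \<theta>_def ll_def exp_add mult.assoc)
  qed (simp add: ll_def)
  show "inverse (gn \<rho> \<delta> n m) * 2 ^ (n+m) * exp (- theta_minus H \<delta> \<rho> n m * X + ln Xm)
          * (if X < - \<rho> * ell H \<delta> (n+m) then 1 else 0) \<le> 1"
  proof (cases "X < - \<rho> * ll")
    case True
    have lnX: "ln Xm = - \<theta> * p + \<theta>^2 * \<sigma>2 / 2" using Xim by (simp add: \<theta>_def theta_minus_def ln_mult)
    have "\<theta> * X \<le> \<theta> * (- \<rho> * ll)" using True th by (intro mult_left_mono) auto
    then have "\<theta> * X + ln Xm \<le> - (\<rho>^2 / 8 * Y)"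
      using lnX pl tl tv by (simp add: power2_eq_square algebra_simps) 
    then have "Z * exp (\<rho>^2 / 8 * Y + (\<theta> * X + ln Xm)) \<le> 1" by (rule key)
    then show ?thesis using True ig by (simp add: \<theta>_def ll_def theta_minus_def exp_add mult.assoc)
  qed (simp add: ll_def)
qed


locale psd_form =
  fixes ip :: "('b \<Rightarrow> real) \<Rightarrow> ('b \<Rightarrow> real) \<Rightarrow> real"
  assumes lin: "\<And>a b x y z. ip (\<lambda>t. a * x t + b * y t) z = a * ip x z + b * ip y z"
    and sym: "\<And>x y. ip x y = ip y x"
    and psd: "\<And>x. 0 \<le> ip x x"
begin

lemma zero_left: "ip (\<lambda>t. 0) z = 0"
  using lin[of 0 _ 0 _ z] by simp

lemma scale_left: "ip (\<lambda>t. a * x t) z = a * ip x z"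
  using lin[of a x 0 x z] by simp

lemma add_left: "ip (\<lambda>t. x t + y t) z = ip x z + ip y z"
  using lin[of 1 x 1 y z] by simp

lemma diff_left: "ip (\<lambda>t. x t - y t) z = ip x z - ip y z"
  using lin[of 1 x "-1" y z] by simp

lemma sum_left: "finite J \<Longrightarrow> ip (\<lambda>t. \<Sum>j\<in>J. a j * v j t) z = (\<Sum>j\<in>J. a j * ip (v j) z)"
proof (induction J rule: finite_induct)
  case empty then show ?case by (simp add: zero_left)
next
  case (insert j J)
  have "ip (\<lambda>t. \<Sum>i\<in>insert j J. a i * v i t) z = ip (\<lambda>t. a j * v j t + (\<Sum>i\<in>J. a i * v i t)) z"
    using insert by simp
  also have "\<dots> = a j * ip (v j) z + ip (\<lambda>t. \<Sum>i\<in>J. a i * v i t) z"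
    using add_left[of "\<lambda>t. a j * v j t" "\<lambda>t. \<Sum>i\<in>J. a i * v i t" z] scale_left by simp
  finally show ?case using insert by simp
qed

lemma sum_right: "finite J \<Longrightarrow> ip z (\<lambda>t. \<Sum>j\<in>J. a j * v j t) = (\<Sum>j\<in>J. a j * ip z (v j))"
  using sum_left[of J a v z] by (simp add: sym)

lemma degenerate: assumes "ip w w = 0" shows "ip r w = 0"
proof (rule ccontr)
  assume ne: "ip r w \<noteq> 0"
  define l where "l = - (ip r r + 1) / (2 * ip r w)"
  have "0 \<le> ip (\<lambda>t. r t + l * w t) (\<lambda>t. r t + l * w t)" by (rule psd)
  also have "\<dots> = ip r r + 2 * l * ip r w + l^2 * ip w w"
  proof -
    have "ip (\<lambda>t. r t + l * w t) (\<lambda>t. r t + l * w t) = ip r (\<lambda>t. r t + l * w t) + l * ip w (\<lambda>t. r t + l * w t)"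
      using lin[of 1 r l w] by simp
    also have "ip r (\<lambda>t. r t + l * w t) = ip r r + l * ip r w"
      using sym[of r "\<lambda>t. r t + l * w t"] lin[of 1 r l w r] sym[of w r] by simp
    also have "ip w (\<lambda>t. r t + l * w t) = ip r w + l * ip w w"
      using sym[of w "\<lambda>t. r t + l * w t"] lin[of 1 r l w w] by simp
    finally show ?thesis by (simp add: power2_eq_square algebra_simps)
  qed
  also have "\<dots> = -1" using ne assms by (simp add: l_def field_simps)
  finally show False by simp
qed

lemma proj_exists:
  "\<exists>a. \<forall>i<(N::nat). ip (\<lambda>t. x t - (\<Sum>j<N. a j * v j t)) (v i) = 0"
proof (induction N arbitrary: x)
  case 0 then show ?case by simp
next
  case (Suc N)
  obtain a where a: "\<And>i. i<N \<Longrightarrow> ip (\<lambda>t. x t - (\<Sum>j<N. a j * v j t)) (v i) = 0" using Suc.IH by blast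
  obtain b where b: "\<And>i. i<N \<Longrightarrow> ip (\<lambda>t. v N t - (\<Sum>j<N. b j * v j t)) (v i) = 0" using Suc.IH by blast
  define r where "r t = x t - (\<Sum>j<N. a j * v j t)" for t
  define w where "w t = v N t - (\<Sum>j<N. b j * v j t)" for t
  define \<kappa> where "\<kappa> = (if ip w w = 0 then 0 else ip r w / ip w w)"
  define a' where "a' j = (if j = N then \<kappa> else a j - \<kappa> * b j)" for j
  have r': "(\<lambda>t. x t - (\<Sum>j<Suc N. a' j * v j t)) = (\<lambda>t. r t - \<kappa> * w t)"
  proof
    fix t
    have "(\<Sum>j<N. a' j * v j t) = (\<Sum>j<N. a j * v j t) - \<kappa> * (\<Sum>j<N. b j * v j t)"
      by (simp add: a'_def algebra_simps sum_subtractf sum_distrib_left)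
    then show "x t - (\<Sum>j<Suc N. a' j * v j t) = r t - \<kappa> * w t"
      by (simp add: a'_def r_def w_def algebra_simps)
  qed
  have rv: "ip r (v i) = 0" "ip w (v i) = 0" if "i < N" for i
    using a[OF that] b[OF that] by (simp_all add: r_def[abs_def] w_def[abs_def])
  have vN: "v N = (\<lambda>t. w t + (\<Sum>j<N. b j * v j t))" by (simp add: w_def)
  have rw: "ip (\<lambda>t. r t - \<kappa> * w t) w = 0"
  proof (cases "ip w w = 0")
    case True then show ?thesis using degenerate[OF True, of "\<lambda>t. r t - \<kappa> * w t"] by simp
  next
    case False then show ?thesis using lin[of 1 r "-\<kappa>" w w] by (simp add: \<kappa>_def)
  qed
  show ?case
  proof (intro exI[of _ a'] allI impI)
    fix i assume "i < Suc N"
    then consider "i < N" | "i = N" by linarith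
    then show "ip (\<lambda>t. x t - (\<Sum>j<Suc N. a' j * v j t)) (v i) = 0"
    proof cases
      case 1
      then show ?thesis unfolding r' using lin[of 1 r "-\<kappa>" w "v i"] rv[OF 1] by simp
    next
      case 2
      have "ip (\<lambda>t. r t - \<kappa> * w t) (v N) = ip (\<lambda>t. r t - \<kappa> * w t) w + (\<Sum>j<N. b j * ip (\<lambda>t. r t - \<kappa> * w t) (v j))"
      proof -
        have "ip (\<lambda>t. r t - \<kappa> * w t) (v N) = ip (v N) (\<lambda>t. r t - \<kappa> * w t)" by (rule sym)
        also have "\<dots> = ip w (\<lambda>t. r t - \<kappa> * w t) + (\<Sum>j<N. b j * ip (v j) (\<lambda>t. r t - \<kappa> * w t))"
          by (subst vN) (simp add: add_left sum_left)
        finally show ?thesis using sym by simp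
      qed
      also have "\<dots> = 0"
      proof -
        have "ip (\<lambda>t. r t - \<kappa> * w t) (v j) = 0" if "j < N" for j
          using rv[OF that] lin[of 1 r "-\<kappa>" w "v j"] by simp
        then show ?thesis using rw by simp
      qed
      finally show ?thesis unfolding r' 2 .
    qed
  qed
qed

end


definition lc :: "(real \<Rightarrow> 'a \<Rightarrow> real) \<Rightarrow> real set \<Rightarrow> (real \<Rightarrow> real) \<Rightarrow> 'a \<Rightarrow> real" where
  "lc B I c x = (\<Sum>t\<in>I. c t * B t x)"

lemma lc_lin: "lc B I (\<lambda>t. a * c t + b * d t) x = a * lc B I c x + b * lc B I d x"
  by (simp add: lc_def sum.distrib sum_distrib_left algebra_simps)

lemma lc_deltas:
  assumes "finite I" "\<And>j. j < N \<Longrightarrow> g j \<in> I"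
  shows "lc B I (\<lambda>t. \<Sum>j<N. a j * (if t = g j then 1 else 0)) x = (\<Sum>j<N. a j * B (g j) x)"
proof -
  have "lc B I (\<lambda>t. \<Sum>j<N. a j * (if t = g j then 1 else 0)) x
      = (\<Sum>t\<in>I. \<Sum>j<N. a j * ((if t = g j then 1 else 0) * B t x))"
    unfolding lc_def by (simp add: sum_distrib_right mult.assoc)
  also have "\<dots> = (\<Sum>j<N. \<Sum>t\<in>I. a j * ((if t = g j then 1 else 0) * B t x))"
    by (rule sum.swap)
  also have "\<dots> = (\<Sum>j<N. a j * B (g j) x)"
  proof (rule sum.cong)
    fix j assume "j \<in> {..<N}"
    then have "g j \<in> I" using assms by simp
    have "(\<Sum>t\<in>I. a j * ((if t = g j then 1 else 0) * B t x)) = (\<Sum>t\<in>I. if t = g j then a j * B t x else 0)"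
      by (intro sum.cong) auto
    then show "(\<Sum>t\<in>I. a j * ((if t = g j then 1 else 0) * B t x)) = a j * B (g j) x"
      using assms(1) \<open>g j \<in> I\<close> by (simp add: sum.delta)
  qed simp
  finally show ?thesis .
qed

lemma lc_delta:
  assumes "finite I" "p \<in> I"
  shows "lc B I (\<lambda>t. if t = p then 1 else 0) x = B p x"
proof -
  have "lc B I (\<lambda>t. if t = p then 1 else 0) x = (\<Sum>t\<in>I. if t = p then B t x else 0)"
    unfolding lc_def by (intro sum.cong) auto
  then show ?thesis using assms by (simp add: sum.delta)
qed

locale fbm_ctx =
  fixes M :: "'a measure" and H :: real and B :: "real \<Rightarrow> 'a \<Rightarrow> real"
  assumes fbm: "fbm M H B"
begin

sublocale prob_space M using fbm by (simp add: fbm_def)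

lemma Bm[measurable]: "t \<in> {0..1} \<Longrightarrow> B t \<in> borel_measurable M"
  using fbm by (simp add: fbm_def)

lemma B_int: "t \<in> {0..1} \<Longrightarrow> integrable M (B t)" "t \<in> {0..1} \<Longrightarrow> expectation (B t) = 0"
  using fbm by (auto simp: fbm_def)

lemma B_cov: "s \<in> {0..1} \<Longrightarrow> t \<in> {0..1} \<Longrightarrow> integrable M (\<lambda>x. B s x * B t x)"
  "s \<in> {0..1} \<Longrightarrow> t \<in> {0..1} \<Longrightarrow> expectation (\<lambda>x. B s x * B t x) =
     (\<bar>s\<bar> powr (2*H) + \<bar>t\<bar> powr (2*H) - \<bar>s - t\<bar> powr (2*H)) / 2"
  using fbm by (auto simp: fbm_def)

context
  fixes I :: "real set"
  assumes I: "finite I" "I \<subseteq> {0..1}"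
begin

lemma Isub: "t \<in> I \<Longrightarrow> t \<in> {0..1}" using I by auto

lemma lc_meas[measurable]: "lc B I c \<in> borel_measurable M"
proof -
  have "(\<lambda>x. \<Sum>t\<in>I. c t * B t x) \<in> borel_measurable M"
    using I by (intro borel_measurable_sum borel_measurable_times borel_measurable_const Bm) auto
  then show ?thesis by (simp add: lc_def[abs_def])
qed

lemma lc_int: "integrable M (lc B I c)" "expectation (lc B I c) = 0"
proof -
  have "integrable M (\<lambda>x. \<Sum>t\<in>I. c t * B t x)"
    using I by (intro Bochner_Integration.integrable_sum Bochner_Integration.integrable_mult_right) (auto intro!: B_int(1) Isub)
  then show "integrable M (lc B I c)" by (simp add: lc_def[abs_def])
  have "expectation (\<lambda>x. \<Sum>t\<in>I. c t * B t x) = (\<Sum>t\<in>I. c t * expectation (B t))"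
    using I B_int Isub by (subst Bochner_Integration.integral_sum) auto
  also have "\<dots> = 0" using I B_int by (intro sum.neutral) auto
  finally show "expectation (lc B I c) = 0" by (simp add: lc_def[abs_def])
qed

lemma lc_prod_int: "integrable M (\<lambda>x. lc B I c x * lc B I d x)"
proof -
  have "(\<lambda>x. lc B I c x * lc B I d x) = (\<lambda>x. \<Sum>t\<in>I. \<Sum>u\<in>I. c t * d u * (B t x * B u x))"
    by (auto simp: lc_def sum_product algebra_simps)
  moreover have "integrable M (\<lambda>x. \<Sum>t\<in>I. \<Sum>u\<in>I. c t * d u * (B t x * B u x))"
    using I by (intro Bochner_Integration.integrable_sum Bochner_Integration.integrable_mult_right) (auto intro!: B_cov(1) Isub)
  ultimately show ?thesis by simp
qed

lemma lc_gauss: "gaussian_rv M (lc B I c)"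
  using fbm I unfolding fbm_def by (simp add: lc_def[abs_def])

definition ip :: "(real \<Rightarrow> real) \<Rightarrow> (real \<Rightarrow> real) \<Rightarrow> real" where
  "ip c d = expectation (\<lambda>x. lc B I c x * lc B I d x)"

lemma ip_psd: "psd_form ip"
proof
  fix a b :: real and x y z :: "real \<Rightarrow> real"
  have "ip (\<lambda>t. a * x t + b * y t) z = expectation (\<lambda>w. a * (lc B I x w * lc B I z w) + b * (lc B I y w * lc B I z w))"
    unfolding ip_def lc_lin by (simp add: algebra_simps)
  also have "\<dots> = a * ip x z + b * ip y z"
    using lc_prod_int by (simp add: ip_def)
  finally show "ip (\<lambda>t. a * x t + b * y t) z = a * ip x z + b * ip y z" .
next
  fix x y show "ip x y = ip y x" by (simp add: ip_def mult.commute)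
next
  fix x show "0 \<le> ip x x" unfolding ip_def by (intro integral_nonneg_AE) auto
qed

lemma lc_gauss_facts:
  "expectation (\<lambda>x. cos (lc B I c x)) = exp (- ip c c / 2)"
  "expectation (\<lambda>x. sin (lc B I c x)) = 0"
  "integrable M (\<lambda>x. exp (\<theta> * lc B I c x))"
  "expectation (\<lambda>x. exp (\<theta> * lc B I c x)) = exp (\<theta>^2 * ip c c / 2)"
proof -
  have sq: "(\<lambda>x. (lc B I c x)^2) = (\<lambda>x. lc B I c x * lc B I c x)" by (simp add: power2_eq_square)
  have i2: "integrable M (\<lambda>x. (lc B I c x)^2)" unfolding sq by (rule lc_prod_int)
  have e2: "expectation (\<lambda>x. (lc B I c x)^2) = ip c c" unfolding sq ip_def ..
  note g = gauss_facts[OF lc_gauss lc_int i2]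
  show "expectation (\<lambda>x. cos (lc B I c x)) = exp (- ip c c / 2)" using g(1) e2 by simp
  show "expectation (\<lambda>x. sin (lc B I c x)) = 0" using g(2) .
  show "integrable M (\<lambda>x. exp (\<theta> * lc B I c x))" using g(3) .
  show "expectation (\<lambda>x. exp (\<theta> * lc B I c x)) = exp (\<theta>^2 * ip c c / 2)" using g(4) e2 by simp
qed


lemma cond_main:
  fixes g :: "nat \<Rightarrow> real" and d :: nat and xc :: "real \<Rightarrow> real" and \<theta>1 \<theta>2 :: real
  assumes gI: "\<And>j. j < d \<Longrightarrow> g j \<in> I"
  shows "\<exists>P \<sigma>2. 0 \<le> \<sigma>2 \<and> \<sigma>2 \<le> ip xc xc \<and>
      (AE x in M. real_cond_exp M (sigma (space M) {B (g j) -` A \<inter> space M | j A. j < d \<and> A \<in> sets borel}) (lc B I xc) x = P x) \<and>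
      (AE x in M. real_cond_exp M (sigma (space M) {B (g j) -` A \<inter> space M | j A. j < d \<and> A \<in> sets borel}) (\<lambda>x. exp (\<theta>1 * lc B I xc x)) x
           = exp (\<theta>1 * P x) * exp (\<theta>1^2 * \<sigma>2 / 2)) \<and>
      (AE x in M. real_cond_exp M (sigma (space M) {B (g j) -` A \<inter> space M | j A. j < d \<and> A \<in> sets borel}) (\<lambda>x. exp (\<theta>2 * lc B I xc x)) x
           = exp (\<theta>2 * P x) * exp (\<theta>2^2 * \<sigma>2 / 2))"
proof -
  define Gen where "Gen = {B (g j) -` A \<inter> space M | j A. j < d \<and> A \<in> sets borel}"
  define F where "F = sigma (space M) Gen"
  interpret psd_form ip by (rule ip_psd)
  have gm[measurable]: "B (g j) \<in> borel_measurable M" if "j < d" for j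
    using gI[OF that] Isub by auto
  define e where "e j t = (if t = g j then 1 else (0::real))" for j t
  obtain a where a: "\<And>i. i < d \<Longrightarrow> ip (\<lambda>t. xc t - (\<Sum>j<d. a j * e j t)) (e i) = 0"
    using proj_exists[where x=xc and N=d and v=e] by blast
  define pc where "pc t = (\<Sum>j<d. a j * e j t)" for t
  define rc where "rc t = xc t - pc t" for t
  define P where "P = lc B I pc"
  define R where "R = lc B I rc"
  have P_eq: "P x = (\<Sum>j<d. a j * B (g j) x)" for x
    unfolding P_def pc_def e_def by (rule lc_deltas[OF I(1) gI])
  have xPR: "lc B I xc x = P x + R x" for x
  proof -
    have "xc = (\<lambda>t. 1 * pc t + 1 * rc t)" by (auto simp: rc_def)
    then have "lc B I xc x = lc B I (\<lambda>t. 1 * pc t + 1 * rc t) x" by simp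
    then show ?thesis unfolding P_def R_def lc_lin by simp
  qed
  have orth: "ip rc (e i) = 0" if "i < d" for i
    using a[OF that] by (simp add: rc_def[abs_def] pc_def[abs_def])
  have orth_sum: "ip rc (\<lambda>t. \<Sum>j<d. t' j * e j t) = 0" for t'
    by (simp add: sum_right orth)
  have xc_eq: "xc = (\<lambda>t. pc t + rc t)" by (auto simp: rc_def)
  have "ip rc pc = 0" unfolding pc_def by (rule orth_sum)
  then have "ip pc rc = 0" by (simp add: sym)
  have "ip xc xc = ip pc pc + ip rc rc"
  proof -
    have "ip xc xc = ip pc xc + ip rc xc" by (subst (1) xc_eq) (rule add_left)
    also have "ip pc xc = ip pc pc + ip pc rc" by (subst sym, subst xc_eq, subst add_left) (simp add: sym)
    also have "ip rc xc = ip rc pc + ip rc rc" by (subst sym, subst xc_eq, subst add_left) (simp add: sym)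
    finally show ?thesis using \<open>ip rc pc = 0\<close> \<open>ip pc rc = 0\<close> by simp
  qed
  then have var: "0 \<le> ip rc rc" "ip rc rc \<le> ip xc xc" using psd[of pc] psd[of rc] by auto
  have GenP: "Gen \<subseteq> Pow (space M)" unfolding Gen_def by auto
  have GenM: "Gen \<subseteq> sets M" unfolding Gen_def by auto
  have sF: "sets F = sigma_sets (space M) Gen" "space F = space M"
    unfolding F_def using GenP by auto
  have subalg: "subalgebra M F"
    unfolding subalgebra_def using sF sets.sigma_sets_subset[OF GenM] by auto
  interpret sigma_finite_subalgebra M F
    by (rule finite_measure_subalgebra_is_sigma_finite)
       (simp add: finite_measure_subalgebra_def finite_measure_subalgebra_axioms_def subalg finite_measure_axioms)
  have gF[measurable]: "B (g j) \<in> borel_measurable F" if "j < d" for j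
  proof (rule measurableI)
    fix A :: "real set" assume "A \<in> sets borel"
    then have "B (g j) -` A \<inter> space M \<in> Gen" unfolding Gen_def using that by blast
    then show "B (g j) -` A \<inter> space F \<in> sets F" using sF by auto
  qed simp
  have PF[measurable]: "P \<in> borel_measurable F"
  proof -
    have "(\<lambda>x. \<Sum>j<d. a j * B (g j) x) \<in> borel_measurable F"
      by (intro borel_measurable_sum borel_measurable_times borel_measurable_const gF) auto
    then show ?thesis using P_eq by (simp add: fun_eq_iff[symmetric] P_eq[abs_def])
  qed
  have Rm[measurable]: "R \<in> borel_measurable M" unfolding R_def by simp
  have Ri: "integrable M R" "expectation R = 0" unfolding R_def using lc_int by auto
  define q where "q t' t = (\<Sum>j<d. t' j * e j t)" for t' t
  have lcq: "lc B I (q t') x = (\<Sum>j<d. t' j * B (g j) x)" for t' x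
    unfolding q_def e_def by (rule lc_deltas[OF I(1) gI])
  have comb: "s * R x + (\<Sum>j<d. t' j * B (g j) x) = lc B I (\<lambda>u. s * rc u + 1 * q t' u) x" for s t' x
    unfolding lc_lin R_def lcq by simp
  have sR: "s * R x = lc B I (\<lambda>u. s * rc u + 0 * rc u) x" for s x
    unfolding lc_lin R_def by simp
  have ipq: "ip rc (q t') = 0" "ip (q t') rc = 0" for t'
    using orth_sum[of t'] by (simp_all add: q_def[abs_def] sym)
  have ipcomb: "ip (\<lambda>u. s * rc u + 1 * q t' u) (\<lambda>u. s * rc u + 1 * q t' u) = s^2 * ip rc rc + ip (q t') (q t')" for s t'
  proof -
    have "ip (\<lambda>u. s * rc u + 1 * q t' u) (\<lambda>u. s * rc u + 1 * q t' u)
        = s * ip rc (\<lambda>u. s * rc u + 1 * q t' u) + ip (q t') (\<lambda>u. s * rc u + 1 * q t' u)"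
      using lin[of s rc 1 "q t'"] by simp
    also have "ip rc (\<lambda>u. s * rc u + 1 * q t' u) = s * ip rc rc"
      using sym[of rc "\<lambda>u. s * rc u + 1 * q t' u"] lin[of s rc 1 "q t'" rc] ipq by simp
    also have "ip (q t') (\<lambda>u. s * rc u + 1 * q t' u) = ip (q t') (q t')"
      using sym[of "q t'" "\<lambda>u. s * rc u + 1 * q t' u"] lin[of s rc 1 "q t'" "q t'"] ipq by simp
    finally show ?thesis by (simp add: power2_eq_square)
  qed
  have ipsR: "ip (\<lambda>u. s * rc u + 0 * rc u) (\<lambda>u. s * rc u + 0 * rc u) = s^2 * ip rc rc" for s
  proof -
    have "ip (\<lambda>u. s * rc u + 0 * rc u) (\<lambda>u. s * rc u + 0 * rc u) = s * ip rc (\<lambda>u. s * rc u + 0 * rc u)"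
      using lin[of s rc 0 rc] by simp
    also have "ip rc (\<lambda>u. s * rc u + 0 * rc u) = s * ip rc rc"
      using sym[of rc "\<lambda>u. s * rc u + 0 * rc u"] lin[of s rc 0 rc rc] by simp
    finally show ?thesis by (simp add: power2_eq_square)
  qed
  have H1: "expectation (\<lambda>x. cos (s * R x + (\<Sum>j<d. t' j * B (g j) x))) =
     expectation (\<lambda>x. cos (s * R x)) * expectation (\<lambda>x. cos (\<Sum>j<d. t' j * B (g j) x))" for s t'
  proof -
    have a1: "expectation (\<lambda>x. cos (s * R x + (\<Sum>j<d. t' j * B (g j) x))) = exp (- (s^2 * ip rc rc + ip (q t') (q t')) / 2)"
      unfolding comb lc_gauss_facts(1) ipcomb ..
    have a2: "expectation (\<lambda>x. cos (s * R x)) = exp (- (s^2 * ip rc rc) / 2)"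
      unfolding sR lc_gauss_facts(1) ipsR ..
    have a3: "expectation (\<lambda>x. cos (\<Sum>j<d. t' j * B (g j) x)) = exp (- ip (q t') (q t') / 2)"
      unfolding lcq[symmetric] lc_gauss_facts(1) ..
    show ?thesis unfolding a1 a2 a3 by (simp add: exp_add[symmetric] add_divide_distrib)
  qed
  have H2: "expectation (\<lambda>x. sin (s * R x + (\<Sum>j<d. t' j * B (g j) x))) = 0" for s t'
    unfolding comb by (rule lc_gauss_facts(2))
  define V where "V j = (if j < d then B (g j) else (\<lambda>_. 0))" for j
  have Vm[measurable]: "V j \<in> borel_measurable M" for j by (simp add: V_def)
  have sumV: "(\<Sum>j<d. t' j * V j x) = (\<Sum>j<d. t' j * B (g j) x)" for t' x
    by (intro sum.cong) (auto simp: V_def)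
  have H1V: "expectation (\<lambda>x. cos (s * R x + (\<Sum>j<d. t' j * V j x))) =
     expectation (\<lambda>x. cos (s * R x)) * expectation (\<lambda>x. cos (\<Sum>j<d. t' j * V j x))" for s t'
    unfolding sumV by (rule H1)
  have H2V: "expectation (\<lambda>x. sin (s * R x + (\<Sum>j<d. t' j * V j x))) = 0" for s t'
    unfolding sumV by (rule H2)
  have VG: "{V j -` A \<inter> space M | j A. j < d \<and> A \<in> sets borel} = Gen"
    unfolding Gen_def by (intro Collect_cong) (auto simp: V_def)
  have IM: "(\<integral>x. indicator S x * f (R x) \<partial>M) = expectation (\<lambda>x. f (R x)) * prob S"
    if f[measurable]: "f \<in> borel_measurable borel" and fnn: "\<And>y. 0 \<le> f y" and fi: "integrable M (\<lambda>x. f (R x))"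
      and S: "S \<in> sets F" for f S
  proof -
    have S': "S \<in> sigma_sets (space M) {V j -` A \<inter> space M | j A. j < d \<and> A \<in> sets borel}"
      using S sF VG by simp
    show ?thesis by (rule indep_main[OF Rm Vm H1V H2V f fnn fi S'])
  qed
  have SM: "A \<in> sets M" if "A \<in> sets F" for A using that subalg by (auto simp: subalgebra_def)
  have Pint: "integrable M P" unfolding P_def using lc_int by auto
  have CER: "AE x in M. real_cond_exp M F R x = 0"
  proof (rule real_cond_exp_charact)
    fix A assume A: "A \<in> sets F"
    have Am[measurable]: "A \<in> sets M" using SM[OF A] .
    have ip1a: "integrable M (\<lambda>x. max (R x) 0)"
    proof (rule int_dom[OF integrable_abs[OF Ri(1)]])
      show "(\<lambda>x. max (R x) 0) \<in> borel_measurable M" using Rm by (intro borel_measurable_max) auto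
      fix x show "\<bar>max (R x) 0\<bar> \<le> \<bar>R x\<bar>" by (auto simp: max_def)
    qed
    have ip1b: "integrable M (\<lambda>x. max (- R x) 0)"
    proof (rule int_dom[OF integrable_abs[OF Ri(1)]])
      show "(\<lambda>x. max (- R x) 0) \<in> borel_measurable M" using Rm by (intro borel_measurable_max) auto
      fix x show "\<bar>max (- R x) 0\<bar> \<le> \<bar>R x\<bar>" by (auto simp: max_def)
    qed
    note ip1 = ip1a ip1b
    have ip2: "integrable M (\<lambda>x. indicator A x * max (R x) 0)" "integrable M (\<lambda>x. indicator A x * max (- R x) 0)"
      using integrable_real_mult_indicator[OF Am ip1(1)] integrable_real_mult_indicator[OF Am ip1(2)]
      by (simp_all add: mult.commute)
    have "(\<integral>x\<in>A. R x \<partial>M) = (\<integral>x. indicator A x * max (R x) 0 - indicator A x * max (- R x) 0 \<partial>M)"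
      unfolding set_lebesgue_integral_def
      by (intro Bochner_Integration.integral_cong) (auto simp: indicator_def max_def)
    also have "\<dots> = (\<integral>x. indicator A x * max (R x) 0 \<partial>M) - (\<integral>x. indicator A x * max (- R x) 0 \<partial>M)"
      using ip2 by (rule Bochner_Integration.integral_diff)
    also have "\<dots> = (expectation (\<lambda>x. max (R x) 0) - expectation (\<lambda>x. max (- R x) 0)) * prob A"
      using IM[of "\<lambda>y. max y 0" A] IM[of "\<lambda>y. max (- y) 0" A] ip1 A by (simp add: left_diff_distrib)
    also have "expectation (\<lambda>x. max (R x) 0) - expectation (\<lambda>x. max (- R x) 0) = expectation (\<lambda>x. max (R x) 0 - max (- R x) 0)"
      using ip1 by (rule Bochner_Integration.integral_diff[symmetric])
    also have "\<dots> = expectation R"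
      by (intro Bochner_Integration.integral_cong) (auto simp: max_def)
    finally show "(\<integral>x\<in>A. R x \<partial>M) = (\<integral>x\<in>A. 0 \<partial>M)" using Ri by simp
  qed (use Ri in auto)
  have CEx: "AE x in M. real_cond_exp M F (lc B I xc) x = P x"
  proof -
    have eq: "lc B I xc = (\<lambda>x. P x + R x)" using xPR by auto
    have "AE x in M. real_cond_exp M F (\<lambda>x. P x + R x) x = real_cond_exp M F P x + real_cond_exp M F R x"
      by (rule real_cond_exp_add[OF Pint Ri(1)])
    moreover have "AE x in M. real_cond_exp M F P x = P x"
      by (rule real_cond_exp_F_meas[OF Pint PF])
    ultimately show ?thesis using CER unfolding eq by eventually_elim simp
  qed
  have CEexp: "AE x in M. real_cond_exp M F (\<lambda>x. exp (\<theta> * lc B I xc x)) x = exp (\<theta> * P x) * exp (\<theta>^2 * ip rc rc / 2)" for \<theta>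
  proof -
    define c where "c = expectation (\<lambda>x. exp (\<theta> * R x))"
    have c_eq: "c = exp (\<theta>^2 * ip rc rc / 2)" unfolding c_def R_def by (rule lc_gauss_facts(4))
    have ie: "integrable M (\<lambda>x. exp (\<theta> * R x))" unfolding R_def by (rule lc_gauss_facts(3))
    have eq: "(\<lambda>x. exp (\<theta> * lc B I xc x)) = (\<lambda>x. exp (\<theta> * P x) * exp (\<theta> * R x))"
      by (auto simp: xPR distrib_left exp_add)
    have ix: "integrable M (\<lambda>x. exp (\<theta> * P x) * exp (\<theta> * R x))"
      using lc_gauss_facts(3)[of \<theta> xc] unfolding eq .
    have m1: "AE x in M. real_cond_exp M F (\<lambda>x. exp (\<theta> * P x) * exp (\<theta> * R x)) x = exp (\<theta> * P x) * real_cond_exp M F (\<lambda>x. exp (\<theta> * R x)) x"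
      by (rule real_cond_exp_mult) (use ix in auto)
    have m2: "AE x in M. real_cond_exp M F (\<lambda>x. exp (\<theta> * R x)) x = c"
    proof (rule real_cond_exp_charact)
      fix A assume A: "A \<in> sets F"
      have Am[measurable]: "A \<in> sets M" using SM[OF A] .
      have "(\<integral>x\<in>A. exp (\<theta> * R x) \<partial>M) = (\<integral>x. indicator A x * exp (\<theta> * R x) \<partial>M)"
        unfolding set_lebesgue_integral_def by simp
      also have "\<dots> = c * prob A" unfolding c_def by (rule IM[OF _ _ _ A]) (use ie in auto)
      also have "\<dots> = (\<integral>x\<in>A. c \<partial>M)" unfolding set_lebesgue_integral_def
        using Am by (simp add: mult.commute)
      finally show "(\<integral>x\<in>A. exp (\<theta> * R x) \<partial>M) = (\<integral>x\<in>A. c \<partial>M)" .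
    qed (use ie in auto)
    show ?thesis using m1 m2 unfolding eq c_eq[symmetric] by eventually_elim simp
  qed
  show ?thesis
    by (intro exI[of _ P] exI[of _ "ip rc rc"] conjI var CEx[unfolded F_def Gen_def] CEexp[unfolded F_def Gen_def])
qed

end

end


context fbm_ctx
begin

lemma second_moment:
  assumes u: "u \<in> {0..1}" and v: "v \<in> {0..1}" and w: "w \<in> {0..1}"
  shows "expectation (\<lambda>x. ((1/2) * B u x - B v x + (1/2) * B w x) * ((1/2) * B u x - B v x + (1/2) * B w x))
    = (1/4) * expectation (\<lambda>x. B u x * B u x) + expectation (\<lambda>x. B v x * B v x) + (1/4) * expectation (\<lambda>x. B w x * B w x)
      - expectation (\<lambda>x. B u x * B v x) - expectation (\<lambda>x. B v x * B w x) + (1/2) * expectation (\<lambda>x. B u x * B w x)"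
proof -
  have i: "integrable M (\<lambda>x. B p x * B q x)" if "p \<in> {u, v, w}" "q \<in> {u, v, w}" for p q
    using that u v w by (intro B_cov(1)) auto
  have "(\<lambda>x. ((1/2) * B u x - B v x + (1/2) * B w x) * ((1/2) * B u x - B v x + (1/2) * B w x)) =
    (\<lambda>x. (1/4) * (B u x * B u x) + (B v x * B v x) + (1/4) * (B w x * B w x)
      - (B u x * B v x) - (B v x * B w x) + (1/2) * (B u x * B w x))"
    by (auto simp: algebra_simps)
  then show ?thesis using i by simp
qed

lemma mk_main:
  fixes n m k :: nat and \<theta>1 \<theta>2 :: real
  assumes m: "1 \<le> m" and k: "1 \<le> k" "k \<le> 2 ^ (n+m-1)"
  shows "\<exists>p \<sigma>2. 0 \<le> \<sigma>2 \<and> \<sigma>2 \<le> 2 powr (- 2 * H * real (n+m)) \<and>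
    (AE x in M. mu M B n m k x = p x \<and>
       Xi M B n m k \<theta>1 x = exp (\<theta>1 * p x) * exp (\<theta>1^2 * \<sigma>2 / 2) \<and>
       Xi M B n m k \<theta>2 x = exp (\<theta>2 * p x) * exp (\<theta>2^2 * \<sigma>2 / 2))"
proof -
  define N where "N = n + m"
  have N1: "1 \<le> N" using m by (simp add: N_def)
  define I where "I = tgrid N ` {..2^N}"
  have finI: "finite I" unfolding I_def by simp
  have tg01: "tgrid N i \<in> {0..1}" if "i \<le> 2^N" for i
  proof -
    have "real i \<le> 2^N" using that by (metis of_nat_le_iff of_nat_numeral of_nat_power)
    then show ?thesis by (simp add: tgrid_def)
  qed
  have subI: "I \<subseteq> {0..1}" unfolding I_def using tg01 by auto
  have gI: "tgrid n j \<in> I" if "j < Suc (2^n)" for j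
  proof -
    have "j * 2^m \<le> 2^n * 2^m" using that by simp
    then have le: "j * 2^m \<le> 2^N" by (simp add: N_def power_add)
    have "tgrid n j = tgrid N (j * 2^m)" by (simp add: tgrid_def N_def power_add)
    then show ?thesis unfolding I_def using le by auto
  qed
  have k2: "2 * k \<le> 2^N"
  proof -
    have "2 * k \<le> 2 * 2^(N-1)" using k(2) by (simp add: N_def)
    also have "\<dots> = 2^N" using N1 by (simp add: power_eq_if[of 2 N])
    finally show ?thesis .
  qed
  define a0 where "a0 = tgrid N (2*k-2)"
  define b0 where "b0 = tgrid N (2*k-1)"
  define c0 where "c0 = tgrid N (2*k)"
  have abcI: "a0 \<in> I" "b0 \<in> I" "c0 \<in> I" unfolding I_def a0_def b0_def c0_def using k2 by auto
  have abc01: "a0 \<in> {0..1}" "b0 \<in> {0..1}" "c0 \<in> {0..1}" using abcI subI by auto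
  define dl where "dl p t = (if t = p then 1 else (0::real))" for p t :: real
  define xc where "xc t = (1/2) * dl a0 t + 1 * ((-1) * dl b0 t + (1/2) * dl c0 t)" for t
  have lcx: "lc B I xc = balpha B n m k"
  proof
    fix x
    have "lc B I xc x = (1/2) * B a0 x + 1 * ((-1) * B b0 x + (1/2) * B c0 x)"
    proof -
      have d: "lc B I (dl p) x = B p x" if "p \<in> I" for p
        unfolding dl_def[abs_def] by (rule lc_delta[OF finI that])
      have "lc B I xc x = (1/2) * lc B I (dl a0) x + 1 * ((-1) * lc B I (dl b0) x + (1/2) * lc B I (dl c0) x)"
        unfolding xc_def[abs_def] lc_lin by (rule refl)
      then show ?thesis using d abcI by simp
    qed
    then show "lc B I xc x = balpha B n m k x"
      by (simp add: balpha_def a0_def b0_def c0_def N_def)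
  qed
  define Gen where "Gen = {B (tgrid n j) -` A \<inter> space M | j A. j < Suc (2^n) \<and> A \<in> sets borel}"
  have GG: "gridF M B n = sigma (space M) Gen"
    unfolding gridF_def Gen_def by (simp add: less_Suc_eq_le)
  obtain P \<sigma>2 where cm: "0 \<le> \<sigma>2" "\<sigma>2 \<le> ip I xc xc"
    "AE x in M. real_cond_exp M (sigma (space M) Gen) (lc B I xc) x = P x"
    "AE x in M. real_cond_exp M (sigma (space M) Gen) (\<lambda>x. exp (\<theta>1 * lc B I xc x)) x = exp (\<theta>1 * P x) * exp (\<theta>1^2 * \<sigma>2 / 2)"
    "AE x in M. real_cond_exp M (sigma (space M) Gen) (\<lambda>x. exp (\<theta>2 * lc B I xc x)) x = exp (\<theta>2 * P x) * exp (\<theta>2^2 * \<sigma>2 / 2)"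
    using cond_main[OF finI subI, where g="tgrid n" and d="Suc (2^n)" and xc=xc and ?\<theta>1.0=\<theta>1 and ?\<theta>2.0=\<theta>2] gI
    unfolding Gen_def by blast
  have GenP: "Gen \<subseteq> Pow (space M)" unfolding Gen_def by auto
  have GenM: "Gen \<subseteq> sets M" unfolding Gen_def using gI subI by (auto intro!: measurable_sets Bm)
  have subalg: "subalgebra M (gridF M B n)"
    unfolding subalgebra_def GG using GenP sets.sigma_sets_subset[OF GenM] by auto
  interpret sigma_finite_subalgebra M "gridF M B n"
    by (rule finite_measure_subalgebra_is_sigma_finite)
       (simp add: finite_measure_subalgebra_def finite_measure_subalgebra_axioms_def subalg finite_measure_axioms)
  have iB: "integrable M (B a0)" "integrable M (B b0)" "integrable M (B c0)" using abc01 B_int by auto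
  have mu_ae: "AE x in M. real_cond_exp M (gridF M B n) (balpha B n m k) x = mu M B n m k x"
  proof -
    have bal: "balpha B n m k = (\<lambda>x. ((1/2) * B a0 x - B b0 x) + (1/2) * B c0 x)"
      by (auto simp: balpha_def a0_def b0_def c0_def N_def)
    have e1: "AE x in M. real_cond_exp M (gridF M B n) (\<lambda>x. ((1/2) * B a0 x - B b0 x) + (1/2) * B c0 x) x =
        real_cond_exp M (gridF M B n) (\<lambda>x. (1/2) * B a0 x - B b0 x) x + real_cond_exp M (gridF M B n) (\<lambda>x. (1/2) * B c0 x) x"
      by (rule real_cond_exp_add) (use iB in auto)
    have e2: "AE x in M. real_cond_exp M (gridF M B n) (\<lambda>x. (1/2) * B a0 x - B b0 x) x =
        real_cond_exp M (gridF M B n) (\<lambda>x. (1/2) * B a0 x) x - real_cond_exp M (gridF M B n) (B b0) x"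
      using real_cond_exp_diff[of "\<lambda>x. (1/2) * B a0 x" "B b0"] iB by auto
    have e3: "AE x in M. real_cond_exp M (gridF M B n) (\<lambda>x. (1/2) * B a0 x) x = (1/2) * real_cond_exp M (gridF M B n) (B a0) x"
      using real_cond_exp_cmult[OF iB(1), of "1/2"] by simp
    have e4: "AE x in M. real_cond_exp M (gridF M B n) (\<lambda>x. (1/2) * B c0 x) x = (1/2) * real_cond_exp M (gridF M B n) (B c0) x"
      using real_cond_exp_cmult[OF iB(3), of "1/2"] by simp
    show ?thesis unfolding bal using e1 e2 e3 e4
      by eventually_elim (simp add: mu_def a0_def b0_def c0_def N_def)
  qed
  have var: "ip I xc xc \<le> 2 powr (- 2 * H * real (n+m))"
  proof -
    define K where "K u v = (\<bar>u\<bar> powr (2*H) + \<bar>v\<bar> powr (2*H) - \<bar>u - v\<bar> powr (2*H)) / 2" for u v :: real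
    have cov: "expectation (\<lambda>x. B u x * B v x) = K u v" if "u \<in> {a0, b0, c0}" "v \<in> {a0, b0, c0}" for u v
      using B_cov(2)[of u v] that abc01 by (auto simp: K_def)
    have "ip I xc xc = expectation (\<lambda>x. balpha B n m k x * balpha B n m k x)"
      by (simp add: ip_def[OF finI subI] lcx)
    also have "\<dots> = expectation (\<lambda>x. ((1/2) * B a0 x - B b0 x + (1/2) * B c0 x) * ((1/2) * B a0 x - B b0 x + (1/2) * B c0 x))"
      by (simp add: balpha_def a0_def b0_def c0_def N_def)
    also have "\<dots> = (1/4) * K a0 a0 + K b0 b0 + (1/4) * K c0 c0 - K a0 b0 - K b0 c0 + (1/2) * K a0 c0"
      unfolding second_moment[OF abc01] using cov by simp
    also have "\<dots> = (1 / 2^N) powr (2*H) - (2 / 2^N) powr (2*H) / 4"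
    proof -
      have d1: "\<bar>a0 - b0\<bar> = 1 / 2^N" "\<bar>b0 - c0\<bar> = 1 / 2^N" "\<bar>a0 - c0\<bar> = 2 / 2^N"
        using k(1) by (auto simp: a0_def b0_def c0_def tgrid_def of_nat_diff diff_divide_distrib[symmetric])
      have z: "\<bar>a0 - a0\<bar> powr (2*H) = 0" "\<bar>b0 - b0\<bar> powr (2*H) = 0" "\<bar>c0 - c0\<bar> powr (2*H) = 0" by simp_all
      have ar: "1/4 * ((A + A - 0)/2) + (Bv + Bv - 0)/2 + 1/4 * ((C + C - 0)/2) - (A + Bv - s)/2 - (Bv + C - s)/2
          + 1/2 * ((A + C - t)/2) = s - t/4" for A Bv C s t :: real
        by (simp add: field_simps)
      show ?thesis unfolding K_def d1 z by (rule ar)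
    qed
    also have "\<dots> \<le> (1 / 2^N) powr (2*H)" by simp
    also have "(1 / 2^N) powr (2*H) = 2 powr (- 2 * H * real (n+m))"
    proof -
      have "(1 / 2^N :: real) = 2 powr (- real N)" by (simp add: powr_minus_divide powr_realpow)
      then show ?thesis by (simp add: powr_powr N_def algebra_simps)
    qed
    finally show ?thesis .
  qed
  show ?thesis
  proof (intro exI[of _ P] exI[of _ \<sigma>2] conjI)
    show "0 \<le> \<sigma>2" by (rule cm(1))
    show "\<sigma>2 \<le> 2 powr (- 2 * H * real (n+m))" using cm(2) var by linarith
    show "AE x in M. mu M B n m k x = P x \<and>
       Xi M B n m k \<theta>1 x = exp (\<theta>1 * P x) * exp (\<theta>1^2 * \<sigma>2 / 2) \<and>
       Xi M B n m k \<theta>2 x = exp (\<theta>2 * P x) * exp (\<theta>2^2 * \<sigma>2 / 2)"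
      using mu_ae cm(3,4,5) unfolding GG[symmetric] lcx
      by eventually_elim (simp add: Xi_def)
  qed
qed

end

theorem lemma5:
  fixes M :: "'a measure" and B :: "real \<Rightarrow> 'a \<Rightarrow> real"
    and H \<delta> \<rho> :: real and n :: nat
  assumes "0 < H" "H < 1" "0 < \<delta>" "\<delta> < H" "0 < \<rho>"
    and "fbm M H B"
    and "n \<ge> Nstar \<rho> \<delta>"
  shows "AE \<omega> in M. BCE M B H \<delta> \<rho> n \<omega> \<longrightarrow>
    (\<forall>m k. 1 \<le> m \<longrightarrow> 1 \<le> k \<longrightarrow> k \<le> 2 ^ (n+m-1) \<longrightarrow>
       Theta M B \<rho> \<delta> n m k (theta_plus H \<delta> \<rho> n m) \<omega>
          * (if balpha B n m k \<omega> > \<rho> * ell H \<delta> (n+m) then 1 else 0) \<le> 1 \<and>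
       Theta M B \<rho> \<delta> n m k (theta_minus H \<delta> \<rho> n m) \<omega>
          * (if balpha B n m k \<omega> < - \<rho> * ell H \<delta> (n+m) then 1 else 0) \<le> 1)"
proof -
  interpret fbm_ctx M H B by unfold_locales (rule assms(6))
  have Z: "0 < Zn \<rho> \<delta> n" "Zn \<rho> \<delta> n \<le> 1" using Zn_props assms(3,5,7) by auto
  define Q where "Q m k x = (\<exists>p \<sigma>2. 0 \<le> \<sigma>2 \<and> \<sigma>2 \<le> 2 powr (- 2 * H * real (n+m)) \<and>
       mu M B n m k x = p \<and>
       Xi M B n m k (theta_plus H \<delta> \<rho> n m) x = exp (theta_plus H \<delta> \<rho> n m * p) * exp ((theta_plus H \<delta> \<rho> n m)^2 * \<sigma>2 / 2) \<and>
       Xi M B n m k (theta_minus H \<delta> \<rho> n m) x = exp (theta_minus H \<delta> \<rho> n m * p) * exp ((theta_minus H \<delta> \<rho> n m)^2 * \<sigma>2 / 2))"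
    for m k :: nat and x
  have each: "AE x in M. 1 \<le> m \<longrightarrow> 1 \<le> k \<longrightarrow> k \<le> 2 ^ (n+m-1) \<longrightarrow> Q m k x" for m k :: nat
  proof (cases "1 \<le> m \<and> 1 \<le> k \<and> k \<le> 2 ^ (n+m-1)")
    case True
    then obtain p \<sigma>2 where ps: "0 \<le> \<sigma>2" "\<sigma>2 \<le> 2 powr (- 2 * H * real (n+m))"
      and ae: "AE x in M. mu M B n m k x = p x \<and>
       Xi M B n m k (theta_plus H \<delta> \<rho> n m) x = exp (theta_plus H \<delta> \<rho> n m * p x) * exp ((theta_plus H \<delta> \<rho> n m)^2 * \<sigma>2 / 2) \<and>
       Xi M B n m k (theta_minus H \<delta> \<rho> n m) x = exp (theta_minus H \<delta> \<rho> n m * p x) * exp ((theta_minus H \<delta> \<rho> n m)^2 * \<sigma>2 / 2)"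
      using mk_main[of m k n "theta_plus H \<delta> \<rho> n m" "theta_minus H \<delta> \<rho> n m"] by blast
    from ae show ?thesis
    proof eventually_elim
      case (elim x) then show ?case using ps unfolding Q_def by blast
    qed
  qed simp
  have "AE x in M. \<forall>m k. 1 \<le> m \<longrightarrow> 1 \<le> k \<longrightarrow> k \<le> 2 ^ (n+m-1) \<longrightarrow> Q m k x"
    using each by (simp add: AE_all_countable)
  then show ?thesis
  proof eventually_elim
    case (elim x)
    show ?case
    proof (intro impI allI)
      fix m k :: nat assume bce: "BCE M B H \<delta> \<rho> n x" and mk: "1 \<le> m" "1 \<le> k" "k \<le> 2 ^ (n+m-1)"
      then obtain p \<sigma>2 where q: "0 \<le> \<sigma>2" "\<sigma>2 \<le> 2 powr (- 2 * H * real (n+m))" "mu M B n m k x = p"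
        "Xi M B n m k (theta_plus H \<delta> \<rho> n m) x = exp (theta_plus H \<delta> \<rho> n m * p) * exp ((theta_plus H \<delta> \<rho> n m)^2 * \<sigma>2 / 2)"
        "Xi M B n m k (theta_minus H \<delta> \<rho> n m) x = exp (theta_minus H \<delta> \<rho> n m * p) * exp ((theta_minus H \<delta> \<rho> n m)^2 * \<sigma>2 / 2)"
        using elim unfolding Q_def by blast
      have pb: "\<bar>p\<bar> \<le> \<rho> / 2 * ell H \<delta> (n+m)" using bce mk q(3) unfolding BCE_def by auto
      show "Theta M B \<rho> \<delta> n m k (theta_plus H \<delta> \<rho> n m) x
          * (if balpha B n m k x > \<rho> * ell H \<delta> (n+m) then 1 else 0) \<le> 1 \<and>
       Theta M B \<rho> \<delta> n m k (theta_minus H \<delta> \<rho> n m) x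
          * (if balpha B n m k x < - \<rho> * ell H \<delta> (n+m) then 1 else 0) \<le> 1"
        unfolding Theta_def using pointwise_bound[OF assms(5) Z pb q(1,2) q(4) q(5)] by blast
    qed
  qed
qed


end
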